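(* Fix a $C^0$-concept over $\mathbb{K}$. Let $E,F\in\mathcal{M}$, $U\subseteq E$ open, $k\in\mathbb{N}_0$ and $f\colon U\to F$ of class $C^k$. Then for all $(x,h,t)\in U^{[1]}$, $$f(x+th)=\sum_{j=0}^k t^j a_j(x,h)+t^kR_{k+1}(x,h,t),$$ where $a_j\colon U\times E\to F$ is of class $C^{k-j}$ and $R_{k+1}\colon U^{[1]}\to F$ is of class $C^0$ and satisfies $R_{k+1}(x,h,0)=0$. An expansion of $f$ with these properties is unique. Moreover, $a_j(x,h)$ is homogeneous of degree $j$ in $h$, i.e. $a_j(x,sh)=s^ja_j(x,h)$ for all $s\in\mathbb{K}$.
   Context: Let $\mathbb{K}$ be a commutative ring with unit carrying a topology. A $C^0$-concept over $\mathbb{K}$ consists of: (a) a class $\mathcal{M}$ of topologized $\mathbb{K}$-modules (modules with an arbitrary topology) with $\mathbb{K}\in\mathcal{M}$; (b) for $E,F\in\mathcal{M}$ and open $U\subseteq E$, a set $C^0(U,F)$ of continuous maps $U\to F$; (c) for $E_1,E_2\in\mathcal{M}$ a topology on $E_1\times E_2$ (not necessarily the product topology) making it a member of $\mathcal{M}$; subject to: (I.1) composites of $C^0$-maps are $C^0$; identities and inclusions of open subsets are $C^0$; (I.2) $x\mapsto rx+b$ is $C^0$; (I.3) $t\mapsto tv+x$, $\mathbb{K}\to E$, is $C^0$; (I.4) $\mathbb{K}^\times$ is open and inversion is $C^0$; (I.5) being $C^0$ is local on open covers; (II.1) projections and the maps $v\mapsto(v,y)$, $w\mapsto(x,w)$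 are $C^0$; (II.2) products $f_1\times f_2$ of $C^0$-maps are $C^0$; (II.3) diagonals are $C^0$; (II.4) exchange and associativity identifications of products are $C^0$ both ways; (II.5) addition and scalar multiplication are $C^0$; (III) a $C^0$-map on an open $U\subseteq\mathbb{K}$ is determined by its restriction to $U\cap\mathbb{K}^\times$. For open $V\subseteq X$, $V^{[1]}=\{(x,v,t)\in V\times X\times\mathbb{K}:x+tv\in V\}$ (topologized as subset of the product from (c)). A $C^0$-map $g\colon V\to Y$ is $C^1$ if there is a $C^0$-map $g^{[1]}\colon V^{[1]}\to Y$ with $g(x+tv)-g(x)=t\,g^{[1]}(x,v,t)$; recursively $V^{[k+1]}=(V^{[k]})^{[1]}$, $g$ is $C^{k+1}$ if $C^k$ and $g^{[k]}$ is $C^1$, $g^{[k+1]}=(g^{[k]})^{[1]}$. *)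

theory Defs
  imports "HOL-Analysis.Analysis"
begin

text \<open>All modules of the class M live in one universe of points: arbitrary atoms,
  scalars of the ring K (constructor Sc), and formal pairs (constructor Pr), so that
  set-theoretic products of modules of M, and the ring K itself, are again sets of points.\<close>

datatype ('k, 'b) pt = At 'b | Sc 'k | Pr "('k, 'b) pt" "('k, 'b) pt"

fun pfst :: "('k, 'b) pt \<Rightarrow> ('k, 'b) pt" where
  "pfst (Pr a b) = a" | "pfst _ = undefined"

fun psnd :: "('k, 'b) pt \<Rightarrow> ('k, 'b) pt" where
  "psnd (Pr a b) = b" | "psnd _ = undefined"

fun unSc :: "('k, 'b) pt \<Rightarrow> 'k" where
  "unSc (Sc t) = t" | "unSc _ = undefined"

record ('k, 'b) tmod =
  mcar :: "('k, 'b) pt set"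
  madd :: "('k, 'b) pt \<Rightarrow> ('k, 'b) pt \<Rightarrow> ('k, 'b) pt"
  mzero :: "('k, 'b) pt"
  msmul :: "'k \<Rightarrow> ('k, 'b) pt \<Rightarrow> ('k, 'b) pt"
  mtop :: "('k, 'b) pt topology"

definition is_tmod :: "('k::comm_ring_1, 'b) tmod \<Rightarrow> bool" where
  "is_tmod M \<longleftrightarrow>
     mzero M \<in> mcar M \<and>
     (\<forall>a\<in>mcar M. \<forall>b\<in>mcar M. madd M a b \<in> mcar M) \<and>
     (\<forall>r. \<forall>a\<in>mcar M. msmul M r a \<in> mcar M) \<and>
     (\<forall>a\<in>mcar M. \<forall>b\<in>mcar M. \<forall>c\<in>mcar M. madd M (madd M a b) c = madd M a (madd M b c)) \<and>
     (\<forall>a\<in>mcar M. \<forall>b\<in>mcar M. madd M a b = madd M b a) \<and>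
     (\<forall>a\<in>mcar M. madd M (mzero M) a = a) \<and>
     (\<forall>a\<in>mcar M. \<exists>b\<in>mcar M. madd M a b = mzero M) \<and>
     (\<forall>r. \<forall>a\<in>mcar M. \<forall>b\<in>mcar M. msmul M r (madd M a b) = madd M (msmul M r a) (msmul M r b)) \<and>
     (\<forall>r s. \<forall>a\<in>mcar M. msmul M (r + s) a = madd M (msmul M r a) (msmul M s a)) \<and>
     (\<forall>r s. \<forall>a\<in>mcar M. msmul M (r * s) a = msmul M r (msmul M s a)) \<and>
     (\<forall>a\<in>mcar M. msmul M 1 a = a) \<and>
     topspace (mtop M) = mcar M"

text \<open>The module structure of the product E1 x E2, with a topology T E1 E2
  (given by the concept, not necessarily the product topology).\<close>

definition prodm ::
  "(('k, 'b) tmod \<Rightarrow> ('k, 'b) tmod \<Rightarrow> ('k, 'b) pt topology) \<Rightarrow>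
   ('k, 'b) tmod \<Rightarrow> ('k, 'b) tmod \<Rightarrow> ('k, 'b) tmod" where
  "prodm T E1 E2 =
     \<lparr> mcar = {Pr a b | a b. a \<in> mcar E1 \<and> b \<in> mcar E2},
       madd = (\<lambda>p q. Pr (madd E1 (pfst p) (pfst q)) (madd E2 (psnd p) (psnd q))),
       mzero = Pr (mzero E1) (mzero E2),
       msmul = (\<lambda>r p. Pr (msmul E1 r (pfst p)) (msmul E2 r (psnd p))),
       mtop = T E1 E2 \<rparr>"

definition ring_inv :: "'k::comm_ring_1 \<Rightarrow> 'k" where
  "ring_inv t = (THE r. t * r = 1)"

text \<open>Parameters: the class Ms of modules, the module Km which is the ring K itself
  (with its topology), the product topologies T, and the predicate C0 E F U f meaning
  "f belongs to C^0(U,F)" for U open in E.  Since HOL functions are total, C0 E F U f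
  only depends on the values of f on U (extensionality condition).\<close>

definition c0_concept ::
  "('k::comm_ring_1, 'b) tmod set \<Rightarrow> ('k, 'b) tmod \<Rightarrow>
   (('k, 'b) tmod \<Rightarrow> ('k, 'b) tmod \<Rightarrow> ('k, 'b) pt topology) \<Rightarrow>
   (('k, 'b) tmod \<Rightarrow> ('k, 'b) tmod \<Rightarrow> ('k, 'b) pt set \<Rightarrow> (('k, 'b) pt \<Rightarrow> ('k, 'b) pt) \<Rightarrow> bool)
   \<Rightarrow> bool" where
  "c0_concept Ms Km T C0 \<longleftrightarrow>
     \<comment> \<open>(a) the class of topologized modules, containing K\<close>
     (\<forall>E\<in>Ms. is_tmod E) \<and>
     Km \<in> Ms \<and>
     mcar Km = range Sc \<and>
     (\<forall>a b. madd Km (Sc a) (Sc b) = Sc (a + b)) \<and>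
     mzero Km = Sc 0 \<and>
     (\<forall>r a. msmul Km r (Sc a) = Sc (r * a)) \<and>
     \<comment> \<open>(b) C^0-maps are continuous maps from an open U in E to F\<close>
     (\<forall>E F U f. C0 E F U f \<longrightarrow>
        E \<in> Ms \<and> F \<in> Ms \<and> openin (mtop E) U \<and> f ` U \<subseteq> mcar F \<and>
        continuous_map (subtopology (mtop E) U) (mtop F) f) \<and>
     (\<forall>E F U f g. C0 E F U f \<longrightarrow> (\<forall>x\<in>U. f x = g x) \<longrightarrow> C0 E F U g) \<and>
     \<comment> \<open>(c) products\<close>
     (\<forall>E1\<in>Ms. \<forall>E2\<in>Ms. prodm T E1 E2 \<in> Ms) \<and>
     \<comment> \<open>(I.1)\<close>
     (\<forall>E F G U V f g. C0 E F U f \<longrightarrow> C0 F G V g \<longrightarrow> f ` U \<subseteq> V \<longrightarrow> C0 E G U (g \<circ> f)) \<and>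
     (\<forall>E\<in>Ms. \<forall>U. openin (mtop E) U \<longrightarrow> C0 E E U id) \<and>
     \<comment> \<open>(I.2)\<close>
     (\<forall>E\<in>Ms. \<forall>r. \<forall>b\<in>mcar E. C0 E E (mcar E) (\<lambda>x. madd E (msmul E r x) b)) \<and>
     \<comment> \<open>(I.3)\<close>
     (\<forall>E\<in>Ms. \<forall>v\<in>mcar E. \<forall>x\<in>mcar E. C0 Km E (mcar Km) (\<lambda>s. madd E (msmul E (unSc s) v) x)) \<and>
     \<comment> \<open>(I.4)\<close>
     openin (mtop Km) (Sc ` {t. t dvd 1}) \<and>
     C0 Km Km (Sc ` {t. t dvd 1}) (\<lambda>s. Sc (ring_inv (unSc s))) \<and>
     \<comment> \<open>(I.5) locality\<close>
     (\<forall>E\<in>Ms. \<forall>F\<in>Ms. \<forall>U f. openin (mtop E) U \<longrightarrow>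
        (\<forall>x\<in>U. \<exists>W. openin (mtop E) W \<and> x \<in> W \<and> W \<subseteq> U \<and> C0 E F W f) \<longrightarrow> C0 E F U f) \<and>
     \<comment> \<open>(II.1)\<close>
     (\<forall>E1\<in>Ms. \<forall>E2\<in>Ms.
        C0 (prodm T E1 E2) E1 (mcar (prodm T E1 E2)) pfst \<and>
        C0 (prodm T E1 E2) E2 (mcar (prodm T E1 E2)) psnd \<and>
        (\<forall>y\<in>mcar E2. C0 E1 (prodm T E1 E2) (mcar E1) (\<lambda>v. Pr v y)) \<and>
        (\<forall>x\<in>mcar E1. C0 E2 (prodm T E1 E2) (mcar E2) (\<lambda>w. Pr x w))) \<and>
     \<comment> \<open>(II.2)\<close>
     (\<forall>E1 E2 F1 F2 U1 U2 f1 f2. C0 E1 F1 U1 f1 \<longrightarrow> C0 E2 F2 U2 f2 \<longrightarrow>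
        C0 (prodm T E1 E2) (prodm T F1 F2) {Pr a b | a b. a \<in> U1 \<and> b \<in> U2}
           (\<lambda>p. Pr (f1 (pfst p)) (f2 (psnd p)))) \<and>
     \<comment> \<open>(II.3)\<close>
     (\<forall>E\<in>Ms. C0 E (prodm T E E) (mcar E) (\<lambda>x. Pr x x)) \<and>
     \<comment> \<open>(II.4)\<close>
     (\<forall>E1\<in>Ms. \<forall>E2\<in>Ms. C0 (prodm T E1 E2) (prodm T E2 E1) (mcar (prodm T E1 E2))
        (\<lambda>p. Pr (psnd p) (pfst p))) \<and>
     (\<forall>E1\<in>Ms. \<forall>E2\<in>Ms. \<forall>E3\<in>Ms.
        C0 (prodm T (prodm T E1 E2) E3) (prodm T E1 (prodm T E2 E3))
           (mcar (prodm T (prodm T E1 E2) E3))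
           (\<lambda>p. Pr (pfst (pfst p)) (Pr (psnd (pfst p)) (psnd p))) \<and>
        C0 (prodm T E1 (prodm T E2 E3)) (prodm T (prodm T E1 E2) E3)
           (mcar (prodm T E1 (prodm T E2 E3)))
           (\<lambda>p. Pr (Pr (pfst p) (pfst (psnd p))) (psnd (psnd p)))) \<and>
     \<comment> \<open>(II.5)\<close>
     (\<forall>E\<in>Ms. C0 (prodm T E E) E (mcar (prodm T E E)) (\<lambda>p. madd E (pfst p) (psnd p)) \<and>
        C0 (prodm T Km E) E (mcar (prodm T Km E)) (\<lambda>p. msmul E (unSc (pfst p)) (psnd p))) \<and>
     \<comment> \<open>(III)\<close>
     (\<forall>F U f g. openin (mtop Km) U \<longrightarrow> C0 Km F U f \<longrightarrow> C0 Km F U g \<longrightarrow>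
        (\<forall>s\<in>U \<inter> Sc ` {t. t dvd 1}. f s = g s) \<longrightarrow> (\<forall>s\<in>U. f s = g s))"

definition ext1 :: "(('k, 'b) tmod \<Rightarrow> ('k, 'b) tmod \<Rightarrow> ('k, 'b) pt topology) \<Rightarrow>
   ('k, 'b) tmod \<Rightarrow> ('k, 'b) tmod \<Rightarrow> ('k, 'b) tmod" where
  "ext1 T Km X = prodm T X (prodm T X Km)"

definition dom1 :: "('k, 'b) tmod \<Rightarrow> ('k, 'b) pt set \<Rightarrow> ('k, 'b) pt set" where
  "dom1 X V = {Pr x (Pr v (Sc t)) | x v t. x \<in> V \<and> v \<in> mcar X \<and> madd X x (msmul X t v) \<in> V}"

fun extn :: "(('k, 'b) tmod \<Rightarrow> ('k, 'b) tmod \<Rightarrow> ('k, 'b) pt topology) \<Rightarrow>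
   ('k, 'b) tmod \<Rightarrow> nat \<Rightarrow> ('k, 'b) tmod \<Rightarrow> ('k, 'b) tmod" where
  "extn T Km 0 X = X"
| "extn T Km (Suc n) X = ext1 T Km (extn T Km n X)"

fun domn :: "(('k, 'b) tmod \<Rightarrow> ('k, 'b) tmod \<Rightarrow> ('k, 'b) pt topology) \<Rightarrow>
   ('k, 'b) tmod \<Rightarrow> nat \<Rightarrow> ('k, 'b) tmod \<Rightarrow> ('k, 'b) pt set \<Rightarrow> ('k, 'b) pt set" where
  "domn T Km 0 X V = V"
| "domn T Km (Suc n) X V = dom1 (extn T Km n X) (domn T Km n X V)"

text \<open>g1 is a difference quotient map g^[1] for g on V (the identity
  g(x+tv) - g(x) = t g^[1](x,v,t), written additively).\<close>

definition is_dq :: "('k, 'b) tmod \<Rightarrow> ('k, 'b) tmod \<Rightarrow> ('k, 'b) pt set \<Rightarrow>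
   (('k, 'b) pt \<Rightarrow> ('k, 'b) pt) \<Rightarrow> (('k, 'b) pt \<Rightarrow> ('k, 'b) pt) \<Rightarrow> bool" where
  "is_dq X Y V g g1 \<longleftrightarrow>
     (\<forall>x v t. x \<in> V \<longrightarrow> v \<in> mcar X \<longrightarrow> madd X x (msmul X t v) \<in> V \<longrightarrow>
        g (madd X x (msmul X t v)) = madd Y (g x) (msmul Y t (g1 (Pr x (Pr v (Sc t))))))"

definition isCk ::
  "(('k, 'b) tmod \<Rightarrow> ('k, 'b) tmod \<Rightarrow> ('k, 'b) pt topology) \<Rightarrow> ('k, 'b) tmod \<Rightarrow>
   (('k, 'b) tmod \<Rightarrow> ('k, 'b) tmod \<Rightarrow> ('k, 'b) pt set \<Rightarrow> (('k, 'b) pt \<Rightarrow> ('k, 'b) pt) \<Rightarrow> bool) \<Rightarrow>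
   nat \<Rightarrow> ('k, 'b) tmod \<Rightarrow> ('k, 'b) tmod \<Rightarrow> ('k, 'b) pt set \<Rightarrow> (('k, 'b) pt \<Rightarrow> ('k, 'b) pt) \<Rightarrow> bool" where
  "isCk T Km C0 n X Y V g \<longleftrightarrow>
     (\<exists>G :: nat \<Rightarrow> ('k, 'b) pt \<Rightarrow> ('k, 'b) pt.
        G 0 = g \<and>
        (\<forall>i\<le>n. C0 (extn T Km i X) Y (domn T Km i X V) (G i)) \<and>
        (\<forall>i<n. is_dq (extn T Km i X) Y (domn T Km i X V) (G i) (G (Suc i))))"

fun msum :: "('k, 'b) tmod \<Rightarrow> (nat \<Rightarrow> ('k, 'b) pt) \<Rightarrow> nat \<Rightarrow> ('k, 'b) pt" where
  "msum M g 0 = mzero M"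
| "msum M g (Suc n) = madd M (msum M g n) (g n)"

definition taylor_exp ::
  "(('k::comm_ring_1, 'b) tmod \<Rightarrow> ('k, 'b) tmod \<Rightarrow> ('k, 'b) pt topology) \<Rightarrow> ('k, 'b) tmod \<Rightarrow>
   (('k, 'b) tmod \<Rightarrow> ('k, 'b) tmod \<Rightarrow> ('k, 'b) pt set \<Rightarrow> (('k, 'b) pt \<Rightarrow> ('k, 'b) pt) \<Rightarrow> bool) \<Rightarrow>
   ('k, 'b) tmod \<Rightarrow> ('k, 'b) tmod \<Rightarrow> ('k, 'b) pt set \<Rightarrow> nat \<Rightarrow> (('k, 'b) pt \<Rightarrow> ('k, 'b) pt) \<Rightarrow>
   (nat \<Rightarrow> ('k, 'b) pt \<Rightarrow> ('k, 'b) pt) \<Rightarrow> (('k, 'b) pt \<Rightarrow> ('k, 'b) pt) \<Rightarrow> bool" where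
  "taylor_exp T Km C0 E F U k f a R \<longleftrightarrow>
     (\<forall>j\<le>k. isCk T Km C0 (k - j) (prodm T E E) F {Pr x h | x h. x \<in> U \<and> h \<in> mcar E} (a j)) \<and>
     C0 (ext1 T Km E) F (dom1 E U) R \<and>
     (\<forall>x\<in>U. \<forall>h\<in>mcar E. R (Pr x (Pr h (Sc 0))) = mzero F) \<and>
     (\<forall>x h t. Pr x (Pr h (Sc t)) \<in> dom1 E U \<longrightarrow>
        f (madd E x (msmul E t h)) =
          madd F (msum F (\<lambda>j. msmul F (t ^ j) (a j (Pr x h))) (Suc k))
                 (msmul F (t ^ k) (R (Pr x (Pr h (Sc t))))))"

end

theory Submission
  imports Defs
begin



lemma prodm_simps[simp]:
  "mcar (prodm T A B) = {Pr a b | a b. a \<in> mcar A \<and> b \<in> mcar B}"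
  "madd (prodm T A B) p q = Pr (madd A (pfst p) (pfst q)) (madd B (psnd p) (psnd q))"
  "mzero (prodm T A B) = Pr (mzero A) (mzero B)"
  "msmul (prodm T A B) r p = Pr (msmul A r (pfst p)) (msmul B r (psnd p))"
  "mtop (prodm T A B) = T A B"
  by (simp_all add: prodm_def)

lemma Pr_in_prodm[simp]: "Pr a b \<in> mcar (prodm T A B) \<longleftrightarrow> a \<in> mcar A \<and> b \<in> mcar B"
  by auto

section \<open>Module algebra\<close>

context
  fixes M :: "('k::comm_ring_1, 'b) tmod"
  assumes M: "is_tmod M"
begin

lemma m_zero[simp]: "mzero M \<in> mcar M" using M unfolding is_tmod_def by metis
lemma m_add[simp]: "a \<in> mcar M \<Longrightarrow> b \<in> mcar M \<Longrightarrow> madd M a b \<in> mcar M"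
  using M unfolding is_tmod_def by metis
lemma m_smul[simp]: "a \<in> mcar M \<Longrightarrow> msmul M r a \<in> mcar M"
  using M unfolding is_tmod_def by metis
lemma m_assoc: "a \<in> mcar M \<Longrightarrow> b \<in> mcar M \<Longrightarrow> c \<in> mcar M \<Longrightarrow>
   madd M (madd M a b) c = madd M a (madd M b c)"
  using M unfolding is_tmod_def by metis
lemma m_comm: "a \<in> mcar M \<Longrightarrow> b \<in> mcar M \<Longrightarrow> madd M a b = madd M b a"
  using M unfolding is_tmod_def by metis
lemma m_lzero[simp]: "a \<in> mcar M \<Longrightarrow> madd M (mzero M) a = a"
  using M unfolding is_tmod_def by metis
lemma m_rzero[simp]: "a \<in> mcar M \<Longrightarrow> madd M a (mzero M) = a"
  using m_comm m_lzero by simp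
lemma m_inv: "a \<in> mcar M \<Longrightarrow> \<exists>b\<in>mcar M. madd M a b = mzero M"
  using M unfolding is_tmod_def by metis
lemma m_sdistr: "a \<in> mcar M \<Longrightarrow> b \<in> mcar M \<Longrightarrow> msmul M r (madd M a b) = madd M (msmul M r a) (msmul M r b)"
  using M unfolding is_tmod_def by metis
lemma m_rdistr: "a \<in> mcar M \<Longrightarrow> msmul M (r + s) a = madd M (msmul M r a) (msmul M s a)"
  using M unfolding is_tmod_def by metis
lemma m_smul_smul: "a \<in> mcar M \<Longrightarrow> msmul M r (msmul M s a) = msmul M (r * s) a"
  using M unfolding is_tmod_def by metis
lemma m_one[simp]: "a \<in> mcar M \<Longrightarrow> msmul M 1 a = a"
  using M unfolding is_tmod_def by metis
lemma m_top: "topspace (mtop M) = mcar M"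
  using M unfolding is_tmod_def by metis

lemma m_cancel: "a \<in> mcar M \<Longrightarrow> b \<in> mcar M \<Longrightarrow> c \<in> mcar M \<Longrightarrow> madd M a b = madd M a c \<Longrightarrow> b = c"
proof -
  assume a: "a \<in> mcar M" and b: "b \<in> mcar M" and c: "c \<in> mcar M" and e: "madd M a b = madd M a c"
  obtain n where n: "n \<in> mcar M" "madd M a n = mzero M" using m_inv[OF a] by blast
  have "b = madd M (madd M n a) b" using n a b by (simp add: m_comm)
  also have "\<dots> = madd M n (madd M a c)" using n a b e by (simp add: m_assoc)
  also have "\<dots> = c" using n a c by (simp add: m_assoc[symmetric] m_comm)
  finally show "b = c" .
qed

lemma m_smul_zero_l[simp]: "a \<in> mcar M \<Longrightarrow> msmul M 0 a = mzero M"
proof -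
  assume a: "a \<in> mcar M"
  have "madd M (msmul M 0 a) (msmul M 0 a) = madd M (msmul M 0 a) (mzero M)"
    using a m_rdistr[of a 0 0] by simp
  then show ?thesis using a m_cancel by (meson m_smul m_zero)
qed

lemma m_smul_zero_r[simp]: "msmul M r (mzero M) = mzero M"
proof -
  have "madd M (msmul M r (mzero M)) (msmul M r (mzero M)) = madd M (msmul M r (mzero M)) (mzero M)"
    using m_sdistr[of "mzero M" "mzero M" r] by simp
  then show ?thesis using m_cancel by (meson m_smul m_zero)
qed

lemma m_neg: "a \<in> mcar M \<Longrightarrow> madd M a (msmul M (-1) a) = mzero M"
  using m_rdistr[of a 1 "-1"] by simp

lemma m_add_smul: "a \<in> mcar M \<Longrightarrow> madd M a (msmul M t (mzero M)) = a" by simp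

end




locale c0c =
  fixes Ms :: "('k::comm_ring_1, 'b) tmod set" and Km :: "('k, 'b) tmod"
    and T :: "('k, 'b) tmod \<Rightarrow> ('k, 'b) tmod \<Rightarrow> ('k, 'b) pt topology"
    and C0 :: "('k, 'b) tmod \<Rightarrow> ('k, 'b) tmod \<Rightarrow> ('k, 'b) pt set \<Rightarrow> (('k, 'b) pt \<Rightarrow> ('k, 'b) pt) \<Rightarrow> bool"
  assumes conc: "c0_concept Ms Km T C0"
begin

lemmas c = conc[unfolded c0_concept_def]

lemma tm: "E \<in> Ms \<Longrightarrow> is_tmod E" using c[THEN conjunct1] by blast
lemma Km_Ms[simp]: "Km \<in> Ms" using c[THEN conjunct2, THEN conjunct1] by blast
lemma Km_car: "mcar Km = range Sc" using c[THEN conjunct2, THEN conjunct2, THEN conjunct1] by blast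
lemma Km_add[simp]: "madd Km (Sc a) (Sc b) = Sc (a + b)" using c[THEN conjunct2, THEN conjunct2, THEN conjunct2, THEN conjunct1] by blast
lemma Km_zero[simp]: "mzero Km = Sc 0" using c[THEN conjunct2, THEN conjunct2, THEN conjunct2, THEN conjunct2, THEN conjunct1] by blast
lemma Km_smul[simp]: "msmul Km r (Sc a) = Sc (r * a)" using c[THEN conjunct2, THEN conjunct2, THEN conjunct2, THEN conjunct2, THEN conjunct2, THEN conjunct1] by blast
lemma Sc_Km[simp]: "Sc a \<in> mcar Km" using Km_car by simp
lemma C0D: "C0 E F U f \<Longrightarrow> E \<in> Ms \<and> F \<in> Ms \<and> openin (mtop E) U \<and> f ` U \<subseteq> mcar F \<and>
        continuous_map (subtopology (mtop E) U) (mtop F) f"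
  using c[THEN conjunct2, THEN conjunct2, THEN conjunct2, THEN conjunct2, THEN conjunct2, THEN conjunct2, THEN conjunct1] by blast
lemma C0_ext: "C0 E F U f \<Longrightarrow> (\<And>x. x \<in> U \<Longrightarrow> f x = g x) \<Longrightarrow> C0 E F U g"
  using c[THEN conjunct2, THEN conjunct2, THEN conjunct2, THEN conjunct2, THEN conjunct2, THEN conjunct2, THEN conjunct2, THEN conjunct1] by blast
lemma prod_Ms[simp]: "E1 \<in> Ms \<Longrightarrow> E2 \<in> Ms \<Longrightarrow> prodm T E1 E2 \<in> Ms"
  using c[THEN conjunct2, THEN conjunct2, THEN conjunct2, THEN conjunct2, THEN conjunct2, THEN conjunct2, THEN conjunct2, THEN conjunct2, THEN conjunct1] by blast
lemma comp0: "C0 E F U f \<Longrightarrow> C0 F G V g \<Longrightarrow> f ` U \<subseteq> V \<Longrightarrow> C0 E G U (g \<circ> f)"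
  using c[THEN conjunct2, THEN conjunct2, THEN conjunct2, THEN conjunct2, THEN conjunct2, THEN conjunct2, THEN conjunct2, THEN conjunct2, THEN conjunct2, THEN conjunct1] by blast
lemma id0: "E \<in> Ms \<Longrightarrow> openin (mtop E) U \<Longrightarrow> C0 E E U id"
  using c[THEN conjunct2, THEN conjunct2, THEN conjunct2, THEN conjunct2, THEN conjunct2, THEN conjunct2, THEN conjunct2, THEN conjunct2, THEN conjunct2, THEN conjunct2, THEN conjunct1] by blast
lemma aff0: "E \<in> Ms \<Longrightarrow> b \<in> mcar E \<Longrightarrow> C0 E E (mcar E) (\<lambda>x. madd E (msmul E r x) b)"
  using c[THEN conjunct2, THEN conjunct2, THEN conjunct2, THEN conjunct2, THEN conjunct2, THEN conjunct2, THEN conjunct2, THEN conjunct2, THEN conjunct2, THEN conjunct2, THEN conjunct2, THEN conjunct1] by blast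
lemma line0: "E \<in> Ms \<Longrightarrow> v \<in> mcar E \<Longrightarrow> x \<in> mcar E \<Longrightarrow> C0 Km E (mcar Km) (\<lambda>s. madd E (msmul E (unSc s) v) x)"
  using c[THEN conjunct2, THEN conjunct2, THEN conjunct2, THEN conjunct2, THEN conjunct2, THEN conjunct2, THEN conjunct2, THEN conjunct2, THEN conjunct2, THEN conjunct2, THEN conjunct2, THEN conjunct2, THEN conjunct1] by blast
lemma units_open: "openin (mtop Km) (Sc ` {t. t dvd 1})"
  using c[THEN conjunct2, THEN conjunct2, THEN conjunct2, THEN conjunct2, THEN conjunct2, THEN conjunct2, THEN conjunct2, THEN conjunct2, THEN conjunct2, THEN conjunct2, THEN conjunct2, THEN conjunct2, THEN conjunct2, THEN conjunct1] by blast
lemma pfst0: "E1 \<in> Ms \<Longrightarrow> E2 \<in> Ms \<Longrightarrow> C0 (prodm T E1 E2) E1 (mcar (prodm T E1 E2)) pfst"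
  using c[THEN conjunct2, THEN conjunct2, THEN conjunct2, THEN conjunct2, THEN conjunct2, THEN conjunct2, THEN conjunct2, THEN conjunct2, THEN conjunct2, THEN conjunct2, THEN conjunct2, THEN conjunct2, THEN conjunct2, THEN conjunct2, THEN conjunct2, THEN conjunct2, THEN conjunct1] by blast
lemma psnd0: "E1 \<in> Ms \<Longrightarrow> E2 \<in> Ms \<Longrightarrow> C0 (prodm T E1 E2) E2 (mcar (prodm T E1 E2)) psnd"
  using c[THEN conjunct2, THEN conjunct2, THEN conjunct2, THEN conjunct2, THEN conjunct2, THEN conjunct2, THEN conjunct2, THEN conjunct2, THEN conjunct2, THEN conjunct2, THEN conjunct2, THEN conjunct2, THEN conjunct2, THEN conjunct2, THEN conjunct2, THEN conjunct2, THEN conjunct1] by blast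
lemma inl0: "E1 \<in> Ms \<Longrightarrow> E2 \<in> Ms \<Longrightarrow> y \<in> mcar E2 \<Longrightarrow> C0 E1 (prodm T E1 E2) (mcar E1) (\<lambda>v. Pr v y)"
  using c[THEN conjunct2, THEN conjunct2, THEN conjunct2, THEN conjunct2, THEN conjunct2, THEN conjunct2, THEN conjunct2, THEN conjunct2, THEN conjunct2, THEN conjunct2, THEN conjunct2, THEN conjunct2, THEN conjunct2, THEN conjunct2, THEN conjunct2, THEN conjunct2, THEN conjunct1] by blast
lemma inr0: "E1 \<in> Ms \<Longrightarrow> E2 \<in> Ms \<Longrightarrow> x \<in> mcar E1 \<Longrightarrow> C0 E2 (prodm T E1 E2) (mcar E2) (\<lambda>w. Pr x w)"
  using c[THEN conjunct2, THEN conjunct2, THEN conjunct2, THEN conjunct2, THEN conjunct2, THEN conjunct2, THEN conjunct2, THEN conjunct2, THEN conjunct2, THEN conjunct2, THEN conjunct2, THEN conjunct2, THEN conjunct2, THEN conjunct2, THEN conjunct2, THEN conjunct2, THEN conjunct1] by blast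
lemma prod0: "C0 E1 F1 U1 f1 \<Longrightarrow> C0 E2 F2 U2 f2 \<Longrightarrow>
        C0 (prodm T E1 E2) (prodm T F1 F2) {Pr a b | a b. a \<in> U1 \<and> b \<in> U2}
           (\<lambda>p. Pr (f1 (pfst p)) (f2 (psnd p)))"
  using c[THEN conjunct2, THEN conjunct2, THEN conjunct2, THEN conjunct2, THEN conjunct2, THEN conjunct2, THEN conjunct2, THEN conjunct2, THEN conjunct2, THEN conjunct2, THEN conjunct2, THEN conjunct2, THEN conjunct2, THEN conjunct2, THEN conjunct2, THEN conjunct2, THEN conjunct2, THEN conjunct1] by blast
lemma diag0: "E \<in> Ms \<Longrightarrow> C0 E (prodm T E E) (mcar E) (\<lambda>x. Pr x x)"
  using c[THEN conjunct2, THEN conjunct2, THEN conjunct2, THEN conjunct2, THEN conjunct2, THEN conjunct2, THEN conjunct2, THEN conjunct2, THEN conjunct2, THEN conjunct2, THEN conjunct2, THEN conjunct2, THEN conjunct2, THEN conjunct2, THEN conjunct2, THEN conjunct2, THEN conjunct2, THEN conjunct2, THEN conjunct1] by blast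
lemma add0: "E \<in> Ms \<Longrightarrow> C0 (prodm T E E) E (mcar (prodm T E E)) (\<lambda>p. madd E (pfst p) (psnd p))"
  using c[THEN conjunct2, THEN conjunct2, THEN conjunct2, THEN conjunct2, THEN conjunct2, THEN conjunct2, THEN conjunct2, THEN conjunct2, THEN conjunct2, THEN conjunct2, THEN conjunct2, THEN conjunct2, THEN conjunct2, THEN conjunct2, THEN conjunct2, THEN conjunct2, THEN conjunct2, THEN conjunct2, THEN conjunct2, THEN conjunct2, THEN conjunct2, THEN conjunct1] by blast
lemma smul0: "E \<in> Ms \<Longrightarrow> C0 (prodm T Km E) E (mcar (prodm T Km E)) (\<lambda>p. msmul E (unSc (pfst p)) (psnd p))"
  using c[THEN conjunct2, THEN conjunct2, THEN conjunct2, THEN conjunct2, THEN conjunct2, THEN conjunct2, THEN conjunct2, THEN conjunct2, THEN conjunct2, THEN conjunct2, THEN conjunct2, THEN conjunct2, THEN conjunct2, THEN conjunct2, THEN conjunct2, THEN conjunct2, THEN conjunct2, THEN conjunct2, THEN conjunct2, THEN conjunct2, THEN conjunct2, THEN conjunct1] by blast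
lemma III: "openin (mtop Km) U \<Longrightarrow> C0 Km F U f \<Longrightarrow> C0 Km F U g \<Longrightarrow>
        (\<And>s. s \<in> U \<inter> Sc ` {t. t dvd 1} \<Longrightarrow> f s = g s) \<Longrightarrow> s \<in> U \<Longrightarrow> f s = g s"
  using c[THEN conjunct2, THEN conjunct2, THEN conjunct2, THEN conjunct2, THEN conjunct2, THEN conjunct2, THEN conjunct2, THEN conjunct2, THEN conjunct2, THEN conjunct2, THEN conjunct2, THEN conjunct2, THEN conjunct2, THEN conjunct2, THEN conjunct2, THEN conjunct2, THEN conjunct2, THEN conjunct2, THEN conjunct2, THEN conjunct2, THEN conjunct2, rule_format] by blast

lemma open_sub: "E \<in> Ms \<Longrightarrow> openin (mtop E) U \<Longrightarrow> U \<subseteq> mcar E"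
  using openin_subset m_top tm by metis

lemma C0_img: "C0 E F U f \<Longrightarrow> x \<in> U \<Longrightarrow> f x \<in> mcar F" using C0D by blast
lemma C0_open: "C0 E F U f \<Longrightarrow> openin (mtop E) U" using C0D by blast
lemma C0_Ms1: "C0 E F U f \<Longrightarrow> E \<in> Ms" using C0D by blast
lemma C0_Ms2: "C0 E F U f \<Longrightarrow> F \<in> Ms" using C0D by blast

lemma comp: "C0 E F U f \<Longrightarrow> C0 F G V g \<Longrightarrow> (\<And>x. x \<in> U \<Longrightarrow> f x \<in> V) \<Longrightarrow> C0 E G U (\<lambda>x. g (f x))"
  using comp0[of E F U f G V g] by (auto simp: o_def)

lemma restr: "C0 E F U f \<Longrightarrow> openin (mtop E) D \<Longrightarrow> D \<subseteq> U \<Longrightarrow> C0 E F D f"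
proof -
  assume f: "C0 E F U f" and D: "openin (mtop E) D" "D \<subseteq> U"
  have "C0 E E D id" using id0 C0_Ms1[OF f] D by blast
  from comp[OF this f] D show ?thesis by auto
qed

lemma const0: "E1 \<in> Ms \<Longrightarrow> E2 \<in> Ms \<Longrightarrow> y \<in> mcar E2 \<Longrightarrow> C0 E1 E2 (mcar E1) (\<lambda>_. y)"
  using comp[OF inl0 psnd0, of E1 E2 y] by auto

lemma const: "E1 \<in> Ms \<Longrightarrow> E2 \<in> Ms \<Longrightarrow> y \<in> mcar E2 \<Longrightarrow> openin (mtop E1) D \<Longrightarrow> C0 E1 E2 D (\<lambda>_. y)"
  by (rule restr[OF const0]) (auto simp: open_sub)

lemma pair: "C0 Z A D f \<Longrightarrow> C0 Z B D g \<Longrightarrow> C0 Z (prodm T A B) D (\<lambda>z. Pr (f z) (g z))"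
proof -
  assume f: "C0 Z A D f" and g: "C0 Z B D g"
  have Z: "Z \<in> Ms" using C0_Ms1[OF f] .
  have d: "C0 Z (prodm T Z Z) D (\<lambda>x. Pr x x)" using restr[OF diag0[OF Z]] C0_open[OF f] open_sub[OF Z] by blast
  have p: "C0 (prodm T Z Z) (prodm T A B) {Pr a b | a b. a \<in> D \<and> b \<in> D} (\<lambda>p. Pr (f (pfst p)) (g (psnd p)))"
    using prod0[OF f g] .
  show ?thesis using comp[OF d p] by auto
qed

lemma fst: "A \<in> Ms \<Longrightarrow> B \<in> Ms \<Longrightarrow> C0 Z (prodm T A B) D f \<Longrightarrow> C0 Z A D (\<lambda>z. pfst (f z))"
  using comp[OF _ pfst0] C0_img by blast
lemma snd: "A \<in> Ms \<Longrightarrow> B \<in> Ms \<Longrightarrow> C0 Z (prodm T A B) D f \<Longrightarrow> C0 Z B D (\<lambda>z. psnd (f z))"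
  using comp[OF _ psnd0] C0_img by blast

lemma add: "C0 Z X D f \<Longrightarrow> C0 Z X D g \<Longrightarrow> C0 Z X D (\<lambda>z. madd X (f z) (g z))"
proof -
  assume f: "C0 Z X D f" and g: "C0 Z X D g"
  show ?thesis using comp[OF pair[OF f g] add0[OF C0_Ms2[OF f]]] C0_img[OF f] C0_img[OF g] by auto
qed

lemma smul: "C0 Z Km D f \<Longrightarrow> C0 Z X D g \<Longrightarrow> C0 Z X D (\<lambda>z. msmul X (unSc (f z)) (g z))"
proof -
  assume f: "C0 Z Km D f" and g: "C0 Z X D g"
  show ?thesis using comp[OF pair[OF f g] smul0[OF C0_Ms2[OF g]]] C0_img[OF f] C0_img[OF g] by auto
qed

lemma lin: "C0 Z X D g \<Longrightarrow> b \<in> mcar X \<Longrightarrow> C0 Z X D (\<lambda>z. madd X (msmul X r (g z)) b)"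
  using comp[OF _ aff0] C0_img C0_Ms2 by metis

lemma scal: "C0 Z X D g \<Longrightarrow> C0 Z X D (\<lambda>z. msmul X r (g z))"
proof -
  assume g: "C0 Z X D g"
  have X: "is_tmod X" using tm C0_Ms2 g by blast
  show ?thesis by (rule C0_ext[OF lin[OF g m_zero[OF X], of r]]) (simp add: C0_img[OF g] X)
qed

lemma addc: "C0 Z X D g \<Longrightarrow> b \<in> mcar X \<Longrightarrow> C0 Z X D (\<lambda>z. madd X b (g z))"
proof -
  assume g: "C0 Z X D g" and b: "b \<in> mcar X"
  have X: "is_tmod X" using tm C0_Ms2 g by blast
  show ?thesis by (rule C0_ext[OF lin[OF g b, of 1]]) (simp add: C0_img[OF g] X b m_comm)
qed

lemma idD: "Z \<in> Ms \<Longrightarrow> openin (mtop Z) D \<Longrightarrow> C0 Z Z D (\<lambda>z. z)"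
  using id0 by (simp add: id_def)

lemma idR: "C0 Z X D f \<Longrightarrow> C0 Z Z D (\<lambda>z. z)"
  by (rule idD[OF C0_Ms1 C0_open]) 

end



definition lift :: "(('k, 'b) pt \<Rightarrow> ('k, 'b) pt) \<Rightarrow> (('k, 'b) pt \<Rightarrow> ('k, 'b) pt) \<Rightarrow> ('k, 'b) pt \<Rightarrow> ('k, 'b) pt" where
  "lift L L0 p = Pr (L (pfst p)) (Pr (L0 (pfst (psnd p))) (psnd (psnd p)))"

fun LL0 :: "(('k, 'b) pt \<Rightarrow> ('k, 'b) pt) \<Rightarrow> nat \<Rightarrow> ('k, 'b) pt \<Rightarrow> ('k, 'b) pt" where
  "LL0 L0 0 = L0"
| "LL0 L0 (Suc i) = lift (LL0 L0 i) (LL0 L0 i)"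

fun LL :: "(('k, 'b) pt \<Rightarrow> ('k, 'b) pt) \<Rightarrow> (('k, 'b) pt \<Rightarrow> ('k, 'b) pt) \<Rightarrow> nat \<Rightarrow> ('k, 'b) pt \<Rightarrow> ('k, 'b) pt" where
  "LL L L0 0 = L"
| "LL L L0 (Suc i) = lift (LL L L0 i) (LL0 L0 i)"

lemma dom1_mem[simp]: "Pr x (Pr v (Sc t)) \<in> dom1 X V \<longleftrightarrow> x \<in> V \<and> v \<in> mcar X \<and> madd X x (msmul X t v) \<in> V"
  by (auto simp: dom1_def)

lemma extn_add: "extn T Km i (extn T Km j X) = extn T Km (i + j) X"
  by (induction i) auto

lemma domn_add: "domn T Km i (extn T Km j X) (domn T Km j X V) = domn T Km (i + j) X V"
  by (induction i) (auto simp: extn_add)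

lemma isCk_shift:
  assumes "G 0 = g" "\<forall>i\<le>n. C0 (extn T Km i X) Y (domn T Km i X V) (G i)"
    "\<forall>i<n. is_dq (extn T Km i X) Y (domn T Km i X V) (G i) (G (Suc i))" "j \<le> n"
  shows "isCk T Km C0 (n - j) (extn T Km j X) Y (domn T Km j X V) (G j)"
  unfolding isCk_def
proof (intro exI[of _ "\<lambda>i. G (i + j)"] conjI allI impI)
  show "G (0 + j) = G j" by simp
next
  fix i assume "i \<le> n - j"
  then show "C0 (extn T Km i (extn T Km j X)) Y (domn T Km i (extn T Km j X) (domn T Km j X V)) (G (i + j))"
    using assms by (simp add: extn_add domn_add)
next
  fix i assume "i < n - j"
  then show "is_dq (extn T Km i (extn T Km j X)) Y (domn T Km i (extn T Km j X) (domn T Km j X V)) (G (i + j)) (G (Suc i + j))"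
    using assms by (simp add: extn_add domn_add)
qed

context c0c
begin

lemma ext1_Ms[simp]: "X \<in> Ms \<Longrightarrow> ext1 T Km X \<in> Ms" by (simp add: ext1_def)
lemma extn_Ms[simp]: "X \<in> Ms \<Longrightarrow> extn T Km n X \<in> Ms" by (induction n) auto

lemma ext1_car: "mcar (ext1 T Km X) = {Pr x (Pr v (Sc t)) | x v t. x \<in> mcar X \<and> v \<in> mcar X}"
  by (auto simp: ext1_def Km_car)

lemma ext1_mem[simp]: "Pr x (Pr v (Sc t)) \<in> mcar (ext1 T Km X) \<longleftrightarrow> x \<in> mcar X \<and> v \<in> mcar X"
  by (auto simp: ext1_car)

lemma ext1_ops[simp]:
  "madd (ext1 T Km X) (Pr x (Pr v (Sc t))) (Pr x' (Pr v' (Sc t'))) = Pr (madd X x x') (Pr (madd X v v') (Sc (t + t')))"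
  "msmul (ext1 T Km X) r (Pr x (Pr v (Sc t))) = Pr (msmul X r x) (Pr (msmul X r v) (Sc (r * t)))"
  "mzero (ext1 T Km X) = Pr (mzero X) (Pr (mzero X) (Sc 0))"
  by (simp_all add: ext1_def)

lemma preimage_open: "C0 Z X (mcar Z) f \<Longrightarrow> openin (mtop X) V \<Longrightarrow> openin (mtop Z) {z \<in> mcar Z. f z \<in> V}"
proof -
  assume f: "C0 Z X (mcar Z) f" and V: "openin (mtop X) V"
  have Z: "is_tmod Z" using tm C0_Ms1[OF f] by blast
  have "continuous_map (mtop Z) (mtop X) f" using C0D[OF f] m_top[OF Z] by (metis subtopology_topspace)
  from openin_continuous_map_preimage[OF this V] show ?thesis using m_top[OF Z] by simp
qed

lemma dqmap: "X \<in> Ms \<Longrightarrow> C0 (ext1 T Km X) X (mcar (ext1 T Km X))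
   (\<lambda>p. madd X (pfst p) (msmul X (unSc (psnd (psnd p))) (pfst (psnd p))))"
proof -
  assume X: "X \<in> Ms"
  have p1: "C0 (ext1 T Km X) X (mcar (ext1 T Km X)) pfst" unfolding ext1_def by (rule pfst0) (auto simp: X)
  have p2: "C0 (ext1 T Km X) (prodm T X Km) (mcar (ext1 T Km X)) psnd" unfolding ext1_def by (rule psnd0) (auto simp: X)
  have a: "C0 (ext1 T Km X) X (mcar (ext1 T Km X)) (\<lambda>p. pfst (psnd p))" by (rule fst[OF X Km_Ms p2])
  have b: "C0 (ext1 T Km X) Km (mcar (ext1 T Km X)) (\<lambda>p. psnd (psnd p))" by (rule snd[OF X Km_Ms p2])
  show ?thesis by (rule add[OF p1 smul[OF b a]])
qed

lemma dom1_open: "X \<in> Ms \<Longrightarrow> openin (mtop X) V \<Longrightarrow> openin (mtop (ext1 T Km X)) (dom1 X V)"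
proof -
  assume X: "X \<in> Ms" and V: "openin (mtop X) V"
  have p1: "C0 (ext1 T Km X) X (mcar (ext1 T Km X)) pfst" unfolding ext1_def by (rule pfst0) (auto simp: X)
  have o1: "openin (mtop (ext1 T Km X)) {z \<in> mcar (ext1 T Km X). pfst z \<in> V}" by (rule preimage_open[OF p1 V])
  have o2: "openin (mtop (ext1 T Km X)) {z \<in> mcar (ext1 T Km X). madd X (pfst z) (msmul X (unSc (psnd (psnd z))) (pfst (psnd z))) \<in> V}"
    by (rule preimage_open[OF dqmap[OF X] V])
  have "dom1 X V = {z \<in> mcar (ext1 T Km X). pfst z \<in> V} \<inter> {z \<in> mcar (ext1 T Km X). madd X (pfst z) (msmul X (unSc (psnd (psnd z))) (pfst (psnd z))) \<in> V}"
    using open_sub[OF X V] by (auto simp: dom1_def ext1_car)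
  then show ?thesis using o1 o2 by (simp add: openin_Int)
qed

lemma domn_open: "X \<in> Ms \<Longrightarrow> openin (mtop X) V \<Longrightarrow> openin (mtop (extn T Km n X)) (domn T Km n X V)"
  by (induction n) (auto simp: dom1_open)

lemma domn_sub: "X \<in> Ms \<Longrightarrow> openin (mtop X) V \<Longrightarrow> domn T Km n X V \<subseteq> mcar (extn T Km n X)"
  using open_sub[OF extn_Ms domn_open] by blast

definition aff where
  "aff Z X L L0 \<longleftrightarrow> C0 Z X (mcar Z) L \<and> C0 Z X (mcar Z) L0 \<and>
     (\<forall>z\<in>mcar Z. \<forall>w\<in>mcar Z. \<forall>t. L (madd Z z (msmul Z t w)) = madd X (L z) (msmul X t (L0 w)) \<and>
        L0 (madd Z z (msmul Z t w)) = madd X (L0 z) (msmul X t (L0 w)))"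

lemma aff_lift: assumes A: "aff Z X L L0"
  shows "aff (ext1 T Km Z) (ext1 T Km X) (lift L L0) (lift L0 L0)"
proof -
  have L: "C0 Z X (mcar Z) L" and L0: "C0 Z X (mcar Z) L0" using A by (auto simp: aff_def)
  have Z: "Z \<in> Ms" and X: "X \<in> Ms" using C0_Ms1[OF L] C0_Ms2[OF L] .
  have p1: "C0 (ext1 T Km Z) Z (mcar (ext1 T Km Z)) pfst" unfolding ext1_def by (rule pfst0) (auto simp: Z)
  have p2: "C0 (ext1 T Km Z) (prodm T Z Km) (mcar (ext1 T Km Z)) psnd" unfolding ext1_def by (rule psnd0) (auto simp: Z)
  have a: "C0 (ext1 T Km Z) Z (mcar (ext1 T Km Z)) (\<lambda>p. pfst (psnd p))" by (rule fst[OF Z Km_Ms p2])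
  have b: "C0 (ext1 T Km Z) Km (mcar (ext1 T Km Z)) (\<lambda>p. psnd (psnd p))" by (rule snd[OF Z Km_Ms p2])
  have i1: "x \<in> mcar (ext1 T Km Z) \<Longrightarrow> pfst x \<in> mcar Z" for x by (auto simp: ext1_car)
  have i2: "x \<in> mcar (ext1 T Km Z) \<Longrightarrow> pfst (psnd x) \<in> mcar Z" for x by (auto simp: ext1_car)
  have c1: "C0 (ext1 T Km Z) (ext1 T Km X) (mcar (ext1 T Km Z)) (lift M M0)"
    if "C0 Z X (mcar Z) M" "C0 Z X (mcar Z) M0" for M M0
    unfolding lift_def ext1_def
    by (rule pair[OF comp[OF p1 that(1) i1] pair[OF comp[OF a that(2) i2] b], unfolded ext1_def])
  show ?thesis unfolding aff_def
  proof (intro conjI c1 L L0 ballI allI)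
    fix z w t assume "z \<in> mcar (ext1 T Km Z)" "w \<in> mcar (ext1 T Km Z)"
    then obtain a b s a' b' s' where zw: "z = Pr a (Pr b (Sc s))" "w = Pr a' (Pr b' (Sc s'))"
      "a \<in> mcar Z" "b \<in> mcar Z" "a' \<in> mcar Z" "b' \<in> mcar Z" by (auto simp: ext1_car)
    show "lift L L0 (madd (ext1 T Km Z) z (msmul (ext1 T Km Z) t w)) =
       madd (ext1 T Km X) (lift L L0 z) (msmul (ext1 T Km X) t (lift L0 L0 w))"
      "lift L0 L0 (madd (ext1 T Km Z) z (msmul (ext1 T Km Z) t w)) =
       madd (ext1 T Km X) (lift L0 L0 z) (msmul (ext1 T Km X) t (lift L0 L0 w))"
      using zw A by (simp_all add: lift_def aff_def)
  qed
qed

lemma aff_LL: "aff Z X L L0 \<Longrightarrow> aff (extn T Km i Z) (extn T Km i X) (LL L L0 i) (LL0 L0 i)"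
proof (induction i)
  case 0 then show ?case by simp
next
  case (Suc i)
  show ?case using aff_lift[OF Suc.IH[OF Suc.prems]] by simp
qed

end



context c0c
begin

lemma dom1_E: "p \<in> dom1 X V \<Longrightarrow> (\<And>x v t. p = Pr x (Pr v (Sc t)) \<Longrightarrow> x \<in> V \<Longrightarrow> v \<in> mcar X \<Longrightarrow> madd X x (msmul X t v) \<in> V \<Longrightarrow> P) \<Longrightarrow> P"
  by (auto simp: dom1_def)

lemma chain:
  assumes g: "isCk T Km C0 n X Y V g" and A: "aff Z X L L0" and D: "openin (mtop Z) D"
    and LD: "\<And>z. z \<in> D \<Longrightarrow> L z \<in> V"
  shows "isCk T Km C0 n Z Y D (\<lambda>z. g (L z))"
proof -
  obtain G where G0: "G 0 = g" and GC: "\<forall>i\<le>n. C0 (extn T Km i X) Y (domn T Km i X V) (G i)"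
    and Gd: "\<forall>i<n. is_dq (extn T Km i X) Y (domn T Km i X V) (G i) (G (Suc i))"
    using g unfolding isCk_def by blast
  have Z: "Z \<in> Ms" and X: "X \<in> Ms" using A C0_Ms1 C0_Ms2 unfolding aff_def by blast+
  have Ai: "aff (extn T Km i Z) (extn T Km i X) (LL L L0 i) (LL0 L0 i)" for i using aff_LL[OF A] .
  have Oi: "openin (mtop (extn T Km i Z)) (domn T Km i Z D)" for i using domn_open[OF Z D] .
  have Si: "domn T Km i Z D \<subseteq> mcar (extn T Km i Z)" for i using domn_sub[OF Z D] .
  have Mi: "\<forall>z\<in>domn T Km i Z D. LL L L0 i z \<in> domn T Km i X V" for i
  proof (induction i)
    case 0 then show ?case using LD by simp
  next
    case (Suc i)
    show ?case
    proof
      fix p assume "p \<in> domn T Km (Suc i) Z D"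
      then have "p \<in> dom1 (extn T Km i Z) (domn T Km i Z D)" by simp
      then obtain z w t where p: "p = Pr z (Pr w (Sc t))" "z \<in> domn T Km i Z D" "w \<in> mcar (extn T Km i Z)"
        "madd (extn T Km i Z) z (msmul (extn T Km i Z) t w) \<in> domn T Km i Z D" by (rule dom1_E)
      have z: "z \<in> mcar (extn T Km i Z)" using p(2) Si by blast
      have e: "LL L L0 i (madd (extn T Km i Z) z (msmul (extn T Km i Z) t w)) =
          madd (extn T Km i X) (LL L L0 i z) (msmul (extn T Km i X) t (LL0 L0 i w))"
        using Ai[of i] z p(3) unfolding aff_def by blast
      have w: "LL0 L0 i w \<in> mcar (extn T Km i X)" using Ai[of i] p(3) C0_img unfolding aff_def by blast
      show "LL L L0 (Suc i) p \<in> domn T Km (Suc i) X V"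
        using p Suc.IH w e[symmetric] by (simp add: lift_def)
    qed
  qed
  show ?thesis unfolding isCk_def
  proof (intro exI[of _ "\<lambda>i z. G i (LL L L0 i z)"] conjI allI impI)
    show "(\<lambda>z. G 0 (LL L L0 0 z)) = (\<lambda>z. g (L z))" by (simp add: G0)
  next
    fix i assume i: "i \<le> n"
    have "C0 (extn T Km i Z) (extn T Km i X) (domn T Km i Z D) (LL L L0 i)"
      using restr[of "extn T Km i Z" "extn T Km i X" "mcar (extn T Km i Z)" "LL L L0 i"] Ai[of i] Oi[of i] Si[of i]
      unfolding aff_def by blast
    from comp[OF this GC[rule_format, OF i]] Mi[of i]
    show "C0 (extn T Km i Z) Y (domn T Km i Z D) (\<lambda>z. G i (LL L L0 i z))" by blast
  next
    fix i assume i: "i < n"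
    show "is_dq (extn T Km i Z) Y (domn T Km i Z D) (\<lambda>z. G i (LL L L0 i z)) (\<lambda>z. G (Suc i) (LL L L0 (Suc i) z))"
      unfolding is_dq_def
    proof (intro allI impI)
      fix z w t assume z: "z \<in> domn T Km i Z D" and w: "w \<in> mcar (extn T Km i Z)"
        and zw: "madd (extn T Km i Z) z (msmul (extn T Km i Z) t w) \<in> domn T Km i Z D"
      have zc: "z \<in> mcar (extn T Km i Z)" using z Si by blast
      have e: "LL L L0 i (madd (extn T Km i Z) z (msmul (extn T Km i Z) t w)) =
          madd (extn T Km i X) (LL L L0 i z) (msmul (extn T Km i X) t (LL0 L0 i w))"
        using Ai[of i] zc w unfolding aff_def by blast
      have w': "LL0 L0 i w \<in> mcar (extn T Km i X)" using Ai[of i] w C0_img unfolding aff_def by blast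
      have m1: "LL L L0 i z \<in> domn T Km i X V" using Mi z by blast
      have m2: "madd (extn T Km i X) (LL L L0 i z) (msmul (extn T Km i X) t (LL0 L0 i w)) \<in> domn T Km i X V"
        using Mi zw e by metis
      have "G i (madd (extn T Km i X) (LL L L0 i z) (msmul (extn T Km i X) t (LL0 L0 i w))) =
          madd Y (G i (LL L L0 i z)) (msmul Y t (G (Suc i) (Pr (LL L L0 i z) (Pr (LL0 L0 i w) (Sc t)))))"
        using Gd[rule_format, OF i] m1 w' m2 unfolding is_dq_def by blast
      then show "G i (LL L L0 i (madd (extn T Km i Z) z (msmul (extn T Km i Z) t w))) =
           madd Y (G i (LL L L0 i z)) (msmul Y t (G (Suc i) (LL L L0 (Suc i) (Pr z (Pr w (Sc t))))))"
        using e by (simp add: lift_def)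
    qed
  qed
qed

end



lemma msum_car: "is_tmod M \<Longrightarrow> (\<And>j. j < n \<Longrightarrow> g j \<in> mcar M) \<Longrightarrow> msum M g n \<in> mcar M"
  by (induction n) auto

lemma alg1: assumes M: "is_tmod M" and s: "s \<in> mcar M" and a: "a \<in> mcar M" and r: "r \<in> mcar M"
  shows "madd M (madd M s (msmul M (t^k) a)) (msmul M (t^Suc k) r) = madd M s (msmul M (t^k) (madd M a (msmul M t r)))"
proof -
  have "msmul M (t^Suc k) r = msmul M (t^k) (msmul M t r)" using M r by (simp add: m_smul_smul mult.commute)
  then show ?thesis using M s a r by (simp add: m_assoc m_sdistr)
qed

lemma alg2: assumes M: "is_tmod M" and s: "s \<in> mcar M" and a: "a \<in> mcar M" and r: "r \<in> mcar M"
  shows "madd M (madd M s (msmul M c a)) (msmul M c r) = madd M s (msmul M c (madd M a r))"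
  using M s a r by (simp add: m_assoc m_sdistr)

context c0c
begin

lemma Km_cases: "s \<in> mcar Km \<Longrightarrow> (\<And>t. s = Sc t \<Longrightarrow> P) \<Longrightarrow> P" using Km_car by auto

lemma uniqB:
  assumes W: "openin (mtop Km) W" and W0: "Sc 0 \<in> W"
    and r: "C0 Km F W \<rho>" and s: "C0 Km F W \<sigma>" and b: "b \<in> mcar F" and c: "c \<in> mcar F"
    and eq: "\<And>t. Sc t \<in> W \<Longrightarrow> madd F b (msmul F t (\<rho> (Sc t))) = madd F c (msmul F t (\<sigma> (Sc t)))"
  shows "b = c \<and> (\<forall>x\<in>W. \<rho> x = \<sigma> x)"
proof -
  have F: "is_tmod F" using tm C0_Ms2[OF r] by blast
  have bc: "b = c" using eq[OF W0] C0_img[OF r W0] C0_img[OF s W0] F b c by simp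
  have u: "\<rho> x = \<sigma> x" if x: "x \<in> W \<inter> Sc ` {t. t dvd 1}" for x
  proof -
    obtain t where t: "x = Sc t" "t dvd 1" "Sc t \<in> W" using x by auto
    obtain q where q: "1 = t * q" using t(2) by (auto elim: dvdE)
    have r1: "\<rho> (Sc t) \<in> mcar F" and s1: "\<sigma> (Sc t) \<in> mcar F" using C0_img r s t(3) by blast+
    have "msmul F t (\<rho> (Sc t)) = msmul F t (\<sigma> (Sc t))"
      using m_cancel[OF F b] eq[OF t(3)] bc r1 s1 F by simp
    then have "msmul F q (msmul F t (\<rho> (Sc t))) = msmul F q (msmul F t (\<sigma> (Sc t)))" by simp
    then show ?thesis using q r1 s1 F t(1) by (simp add: m_smul_smul mult.commute)
  qed
  have "\<forall>x\<in>W. \<rho> x = \<sigma> x" using III[OF W r s u] by blast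
  with bc show ?thesis by blast
qed

lemma uniqV:
  assumes W: "openin (mtop Km) W" and W0: "Sc 0 \<in> W" and F: "F \<in> Ms"
  shows "\<And>\<rho> \<sigma>. C0 Km F W \<rho> \<Longrightarrow> C0 Km F W \<sigma> \<Longrightarrow> (\<forall>j<k. b j \<in> mcar F \<and> c j \<in> mcar F) \<Longrightarrow>
    (\<forall>t. Sc t \<in> W \<longrightarrow> madd F (msum F (\<lambda>j. msmul F (t^j) (b j)) k) (msmul F (t^k) (\<rho> (Sc t))) =
                       madd F (msum F (\<lambda>j. msmul F (t^j) (c j)) k) (msmul F (t^k) (\<sigma> (Sc t)))) \<Longrightarrow>
    (\<forall>j<k. b j = c j) \<and> (\<forall>x\<in>W. \<rho> x = \<sigma> x)"
proof (induction k)
  case 0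
  have Ft: "is_tmod F" using tm F by blast
  have "\<rho> x = \<sigma> x" if x: "x \<in> W" for x
  proof -
    obtain t where t: "x = Sc t" using x open_sub[OF Km_Ms W] Km_car by auto
    show ?thesis using 0(4) x t C0_img[OF 0(1) x] C0_img[OF 0(2) x] Ft by auto
  qed
  then show ?case by simp
next
  case (Suc k \<rho> \<sigma>)
  have Ft: "is_tmod F" using tm F by blast
  define \<rho>' where "\<rho>' = (\<lambda>x. madd F (b k) (msmul F (unSc x) (\<rho> x)))"
  define \<sigma>' where "\<sigma>' = (\<lambda>x. madd F (c k) (msmul F (unSc x) (\<sigma> x)))"
  have bk: "b k \<in> mcar F" "c k \<in> mcar F" using Suc.prems(3) by auto
  have r': "C0 Km F W \<rho>'" unfolding \<rho>'_def by (rule addc[OF smul[OF idR[OF Suc.prems(1)] Suc.prems(1)] bk(1)])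
  have s': "C0 Km F W \<sigma>'" unfolding \<sigma>'_def by (rule addc[OF smul[OF idR[OF Suc.prems(2)] Suc.prems(2)] bk(2)])
  have eq: "madd F (msum F (\<lambda>j. msmul F (t^j) (b j)) k) (msmul F (t^k) (\<rho>' (Sc t))) =
            madd F (msum F (\<lambda>j. msmul F (t^j) (c j)) k) (msmul F (t^k) (\<sigma>' (Sc t)))" if t: "Sc t \<in> W" for t
  proof -
    have r1: "\<rho> (Sc t) \<in> mcar F" and s1: "\<sigma> (Sc t) \<in> mcar F" using C0_img Suc.prems(1,2) t by blast+
    have m1: "msum F (\<lambda>j. msmul F (t^j) (b j)) k \<in> mcar F" "msum F (\<lambda>j. msmul F (t^j) (c j)) k \<in> mcar F"
      using Suc.prems(3) Ft by (auto intro!: msum_car)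
    show ?thesis using Suc.prems(4) t alg1[OF Ft m1(1) bk(1) r1, of t k] alg1[OF Ft m1(2) bk(2) s1, of t k]
      unfolding \<rho>'_def \<sigma>'_def by simp
  qed
  have IH: "(\<forall>j<k. b j = c j) \<and> (\<forall>x\<in>W. \<rho>' x = \<sigma>' x)"
    using Suc.IH[OF r' s'] Suc.prems(3) eq by auto
  have B: "b k = c k \<and> (\<forall>x\<in>W. \<rho> x = \<sigma> x)"
    by (rule uniqB[OF W W0 Suc.prems(1,2) bk]) (use IH in \<open>auto simp: \<rho>'_def \<sigma>'_def\<close>)
  show ?case using IH B less_Suc_eq by auto
qed

lemma uniqT:
  assumes W: "openin (mtop Km) W" and W0: "Sc 0 \<in> W" and F: "F \<in> Ms"
    and r: "C0 Km F W \<rho>" and s: "C0 Km F W \<sigma>" and bc: "\<forall>j\<le>k. b j \<in> mcar F \<and> c j \<in> mcar F"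
    and r0: "\<rho> (Sc 0) = mzero F" and s0: "\<sigma> (Sc 0) = mzero F"
    and eq: "\<forall>t. Sc t \<in> W \<longrightarrow> madd F (msum F (\<lambda>j. msmul F (t^j) (b j)) (Suc k)) (msmul F (t^k) (\<rho> (Sc t))) =
                       madd F (msum F (\<lambda>j. msmul F (t^j) (c j)) (Suc k)) (msmul F (t^k) (\<sigma> (Sc t)))"
  shows "(\<forall>j\<le>k. b j = c j) \<and> (\<forall>x\<in>W. \<rho> x = \<sigma> x)"
proof -
  have Ft: "is_tmod F" using tm F by blast
  define \<rho>' where "\<rho>' = (\<lambda>x. madd F (b k) (\<rho> x))"
  define \<sigma>' where "\<sigma>' = (\<lambda>x. madd F (c k) (\<sigma> x))"
  have bk: "b k \<in> mcar F" "c k \<in> mcar F" using bc by auto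
  have r': "C0 Km F W \<rho>'" unfolding \<rho>'_def by (rule addc[OF r bk(1)])
  have s': "C0 Km F W \<sigma>'" unfolding \<sigma>'_def by (rule addc[OF s bk(2)])
  have eq': "\<forall>t. Sc t \<in> W \<longrightarrow> madd F (msum F (\<lambda>j. msmul F (t^j) (b j)) k) (msmul F (t^k) (\<rho>' (Sc t))) =
            madd F (msum F (\<lambda>j. msmul F (t^j) (c j)) k) (msmul F (t^k) (\<sigma>' (Sc t)))"
  proof (intro allI impI)
    fix t assume t: "Sc t \<in> W"
    have r1: "\<rho> (Sc t) \<in> mcar F" and s1: "\<sigma> (Sc t) \<in> mcar F" using C0_img r s t by blast+
    have m1: "msum F (\<lambda>j. msmul F (t^j) (b j)) k \<in> mcar F" "msum F (\<lambda>j. msmul F (t^j) (c j)) k \<in> mcar F"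
      using bc Ft by (auto intro!: msum_car)
    show "madd F (msum F (\<lambda>j. msmul F (t^j) (b j)) k) (msmul F (t^k) (\<rho>' (Sc t))) =
            madd F (msum F (\<lambda>j. msmul F (t^j) (c j)) k) (msmul F (t^k) (\<sigma>' (Sc t)))"
      using eq t alg2[OF Ft m1(1) bk(1) r1, of "t^k"] alg2[OF Ft m1(2) bk(2) s1, of "t^k"]
      unfolding \<rho>'_def \<sigma>'_def by simp
  qed
  have V: "(\<forall>j<k. b j = c j) \<and> (\<forall>x\<in>W. \<rho>' x = \<sigma>' x)"
    using uniqV[OF W W0 F r' s' _ eq'] bc by auto
  have bkc: "b k = c k" using V W0 r0 s0 bk Ft unfolding \<rho>'_def \<sigma>'_def by force
  have "\<forall>x\<in>W. \<rho> x = \<sigma> x"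
  proof
    fix x assume x: "x \<in> W"
    have "madd F (b k) (\<rho> x) = madd F (b k) (\<sigma> x)" using V x bkc unfolding \<rho>'_def \<sigma>'_def by simp
    then show "\<rho> x = \<sigma> x" using m_cancel[OF Ft bk(1)] C0_img r s x by blast
  qed
  then show ?thesis using V bkc le_less by auto
qed

end



lemma box_equals': "f = a \<Longrightarrow> f = b \<Longrightarrow> b = a" by simp

lemma msum_cong: "(\<And>j. j < n \<Longrightarrow> g j = g' j) \<Longrightarrow> msum M g n = msum M g' n"
  by (induction n) auto

context c0c
begin

definition WW :: "('k, 'b) tmod \<Rightarrow> ('k, 'b) pt set \<Rightarrow> ('k, 'b) pt \<Rightarrow> ('k, 'b) pt \<Rightarrow> ('k, 'b) pt set" where
  "WW E U x h = {s \<in> mcar Km. madd E x (msmul E (unSc s) h) \<in> U}"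

lemma WW_mem[simp]: "Sc t \<in> WW E U x h \<longleftrightarrow> madd E x (msmul E t h) \<in> U"
  by (simp add: WW_def)

lemma WW_open: assumes E: "E \<in> Ms" and U: "openin (mtop E) U" and x: "x \<in> U" and h: "h \<in> mcar E"
  shows "openin (mtop Km) (WW E U x h)" "Sc 0 \<in> WW E U x h"
proof -
  have Et: "is_tmod E" using tm E by blast
  have xE: "x \<in> mcar E" using open_sub[OF E U] x by blast
  have "C0 Km E (mcar Km) (\<lambda>s. madd E x (msmul E (unSc s) h))"
    by (rule C0_ext[OF line0[OF E h xE]]) (simp add: m_comm[OF Et] xE h Et)
  from preimage_open[OF this U] show "openin (mtop Km) (WW E U x h)" by (simp add: WW_def)
  show "Sc 0 \<in> WW E U x h" using x xE h Et by simp
qed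

lemma curve: assumes E: "E \<in> Ms" and R: "C0 (ext1 T Km E) F (dom1 E U) R" and U: "openin (mtop E) U"
  and x: "x \<in> U" and h: "h \<in> mcar E"
  shows "C0 Km F (WW E U x h) (\<lambda>s. R (Pr x (Pr h s)))"
proof -
  have xE: "x \<in> mcar E" using open_sub[OF E U] x by blast
  have g1: "C0 Km (prodm T E Km) (mcar Km) (\<lambda>s. Pr h s)" by (rule inr0[OF E Km_Ms h])
  have g2: "C0 (prodm T E Km) (ext1 T Km E) (mcar (prodm T E Km)) (\<lambda>w. Pr x w)"
    unfolding ext1_def by (rule inr0[OF E _ xE]) (simp add: E)
  have g: "C0 Km (ext1 T Km E) (mcar Km) (\<lambda>s. Pr x (Pr h s))" using comp[OF g1 g2] h by simp
  have g': "C0 Km (ext1 T Km E) (WW E U x h) (\<lambda>s. Pr x (Pr h s))"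
    by (rule restr[OF g WW_open(1)[OF E U x h]]) (auto simp: WW_def)
  show ?thesis
  proof (rule comp[OF g' R])
    fix s assume "s \<in> WW E U x h"
    then obtain t where "s = Sc t" "madd E x (msmul E t h) \<in> U" using Km_car by (auto simp: WW_def)
    then show "Pr x (Pr h s) \<in> dom1 E U" using x h by simp
  qed
qed

lemma isCk_C0: "isCk T Km C0 n X Y V g \<Longrightarrow> C0 X Y V g"
  unfolding isCk_def by force

lemma te_a_car: "taylor_exp T Km C0 E F U k f a R \<Longrightarrow> j \<le> k \<Longrightarrow> x \<in> U \<Longrightarrow> h \<in> mcar E \<Longrightarrow> a j (Pr x h) \<in> mcar F"
  unfolding taylor_exp_def by (fastforce dest!: isCk_C0 intro: C0_img)

lemma te_eq: "taylor_exp T Km C0 E F U k f a R \<Longrightarrow> Pr x (Pr h (Sc t)) \<in> dom1 E U \<Longrightarrow>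
        f (madd E x (msmul E t h)) =
          madd F (msum F (\<lambda>j. msmul F (t ^ j) (a j (Pr x h))) (Suc k))
                 (msmul F (t ^ k) (R (Pr x (Pr h (Sc t)))))"
  unfolding taylor_exp_def by blast

lemma uniq_taylor:
  assumes E: "E \<in> Ms" and F: "F \<in> Ms" and U: "openin (mtop E) U"
    and A: "taylor_exp T Km C0 E F U k f a R" and B: "taylor_exp T Km C0 E F U k f a' R'"
  shows "(\<forall>j\<le>k. \<forall>x\<in>U. \<forall>h\<in>mcar E. a' j (Pr x h) = a j (Pr x h)) \<and> (\<forall>p\<in>dom1 E U. R' p = R p)"
proof -
  have main: "(\<forall>j\<le>k. a' j (Pr x h) = a j (Pr x h)) \<and> (\<forall>s\<in>WW E U x h. R' (Pr x (Pr h s)) = R (Pr x (Pr h s)))"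
    if x: "x \<in> U" and h: "h \<in> mcar E" for x h
  proof (rule uniqT[OF WW_open[OF E U x h] F])
    show "C0 Km F (WW E U x h) (\<lambda>s. R' (Pr x (Pr h s)))" using curve[OF E _ U x h] B by (simp add: taylor_exp_def)
    show "C0 Km F (WW E U x h) (\<lambda>s. R (Pr x (Pr h s)))" using curve[OF E _ U x h] A by (simp add: taylor_exp_def)
    show "\<forall>j\<le>k. a' j (Pr x h) \<in> mcar F \<and> a j (Pr x h) \<in> mcar F" using te_a_car A B x h by blast
    show "R' (Pr x (Pr h (Sc 0))) = mzero F" "R (Pr x (Pr h (Sc 0))) = mzero F"
      using A B x h by (simp_all add: taylor_exp_def)
    show "\<forall>t. Sc t \<in> WW E U x h \<longrightarrow>
      madd F (msum F (\<lambda>j. msmul F (t ^ j) (a' j (Pr x h))) (Suc k)) (msmul F (t ^ k) (R' (Pr x (Pr h (Sc t))))) =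
      madd F (msum F (\<lambda>j. msmul F (t ^ j) (a j (Pr x h))) (Suc k)) (msmul F (t ^ k) (R (Pr x (Pr h (Sc t)))))"
    proof (intro allI impI)
      fix t assume "Sc t \<in> WW E U x h"
      then have d: "Pr x (Pr h (Sc t)) \<in> dom1 E U" using x h by simp
      show "madd F (msum F (\<lambda>j. msmul F (t ^ j) (a' j (Pr x h))) (Suc k)) (msmul F (t ^ k) (R' (Pr x (Pr h (Sc t))))) =
      madd F (msum F (\<lambda>j. msmul F (t ^ j) (a j (Pr x h))) (Suc k)) (msmul F (t ^ k) (R (Pr x (Pr h (Sc t)))))"
        using te_eq[OF A d] te_eq[OF B d] by (rule box_equals')
    qed
  qed
  show ?thesis
  proof (intro conjI ballI allI impI)
    fix j x h assume "j \<le> k" "x \<in> U" "h \<in> mcar E"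
    then show "a' j (Pr x h) = a j (Pr x h)" using main by blast
  next
    fix p assume "p \<in> dom1 E U"
    then obtain x h t where "p = Pr x (Pr h (Sc t))" "x \<in> U" "h \<in> mcar E" "Sc t \<in> WW E U x h"
      by (auto elim: dom1_E)
    then show "R' p = R p" using main by blast
  qed
qed

lemma homog:
  assumes E: "E \<in> Ms" and F: "F \<in> Ms" and U: "openin (mtop E) U"
    and A: "taylor_exp T Km C0 E F U k f a R" and j: "j \<le> k" and x: "x \<in> U" and h: "h \<in> mcar E"
  shows "a j (Pr x (msmul E s h)) = msmul F (s ^ j) (a j (Pr x h))"
proof -
  have Et: "is_tmod E" using tm E by blast
  have Ft: "is_tmod F" using tm F by blast
  define h' where "h' = msmul E s h"
  have h': "h' \<in> mcar E" using h Et by (simp add: h'_def)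
  have RC: "C0 (ext1 T Km E) F (dom1 E U) R" using A by (simp add: taylor_exp_def)
  have mu0: "C0 Km Km (mcar Km) (\<lambda>w. madd Km (msmul Km s w) (Sc 0))" by (rule aff0) simp_all
  have mu: "C0 Km Km (WW E U x h') (\<lambda>w. Sc (s * unSc w))"
  proof (rule C0_ext[OF restr[OF mu0 WW_open(1)[OF E U x h']]])
    show "WW E U x h' \<subseteq> mcar Km" by (auto simp: WW_def)
    fix w assume "w \<in> WW E U x h'"
    then show "madd Km (msmul Km s w) (Sc 0) = Sc (s * unSc w)" using Km_car by (auto simp: WW_def)
  qed
  have mem: "madd E x (msmul E (s * t) h) \<in> U" if "Sc t \<in> WW E U x h'" for t
    using that h Et by (simp add: h'_def m_smul_smul mult.commute)
  have sig: "C0 Km F (WW E U x h') (\<lambda>w. msmul F (s ^ k) (R (Pr x (Pr h (Sc (s * unSc w))))))"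
  proof (rule scal)
    show "C0 Km F (WW E U x h') (\<lambda>w. R (Pr x (Pr h (Sc (s * unSc w)))))"
    proof (rule comp[OF mu curve[OF E RC U x h]])
      fix w assume "w \<in> WW E U x h'"
      then obtain t where "w = Sc t" "Sc t \<in> WW E U x h'" using Km_car by (auto simp: WW_def)
      then show "Sc (s * unSc w) \<in> WW E U x h" using mem by simp
    qed
  qed
  have U2: "(\<forall>j\<le>k. a j (Pr x h') = msmul F (s ^ j) (a j (Pr x h))) \<and>
     (\<forall>w\<in>WW E U x h'. R (Pr x (Pr h' w)) = msmul F (s ^ k) (R (Pr x (Pr h (Sc (s * unSc w))))))"
  proof (rule uniqT[OF WW_open[OF E U x h'] F curve[OF E RC U x h'] sig])
    show "\<forall>j\<le>k. a j (Pr x h') \<in> mcar F \<and> msmul F (s ^ j) (a j (Pr x h)) \<in> mcar F"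
      using te_a_car[OF A] x h h' Ft by simp
    show "R (Pr x (Pr h' (Sc 0))) = mzero F" "msmul F (s ^ k) (R (Pr x (Pr h (Sc (s * unSc (Sc 0)))))) = mzero F"
      using A x h h' Ft by (simp_all add: taylor_exp_def)
    show "\<forall>t. Sc t \<in> WW E U x h' \<longrightarrow>
      madd F (msum F (\<lambda>j. msmul F (t ^ j) (a j (Pr x h'))) (Suc k)) (msmul F (t ^ k) (R (Pr x (Pr h' (Sc t))))) =
      madd F (msum F (\<lambda>j. msmul F (t ^ j) (msmul F (s ^ j) (a j (Pr x h)))) (Suc k))
        (msmul F (t ^ k) (msmul F (s ^ k) (R (Pr x (Pr h (Sc (s * unSc (Sc t))))))))"
    proof (intro allI impI)
      fix t assume t: "Sc t \<in> WW E U x h'"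
      have d1: "Pr x (Pr h' (Sc t)) \<in> dom1 E U" using t x h' by simp
      have d2: "Pr x (Pr h (Sc (s * t))) \<in> dom1 E U" using mem[OF t] x h by simp
      have e1: "f (madd E x (msmul E t h')) = madd F (msum F (\<lambda>j. msmul F (t ^ j) (a j (Pr x h'))) (Suc k)) (msmul F (t ^ k) (R (Pr x (Pr h' (Sc t)))))"
        using te_eq[OF A d1] .
      have e2: "f (madd E x (msmul E (s * t) h)) = madd F (msum F (\<lambda>j. msmul F ((s * t) ^ j) (a j (Pr x h))) (Suc k)) (msmul F ((s * t) ^ k) (R (Pr x (Pr h (Sc (s * t))))))"
        using te_eq[OF A d2] .
      have xx: "madd E x (msmul E t h') = madd E x (msmul E (s * t) h)"
        using h Et by (simp add: h'_def m_smul_smul mult.commute)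
      have Rc: "R (Pr x (Pr h (Sc (s * t)))) \<in> mcar F" using C0_img[OF RC d2] .
      have sc: "msmul F ((s * t) ^ i) y = msmul F (t ^ i) (msmul F (s ^ i) y)" if "y \<in> mcar F" for i y
        using that Ft by (simp add: m_smul_smul power_mult_distrib mult.commute)
      have "msum F (\<lambda>j. msmul F ((s * t) ^ j) (a j (Pr x h))) (Suc k) = msum F (\<lambda>j. msmul F (t ^ j) (msmul F (s ^ j) (a j (Pr x h)))) (Suc k)"
        by (rule msum_cong) (use sc te_a_car[OF A _ x h] in auto)
      then show "madd F (msum F (\<lambda>j. msmul F (t ^ j) (a j (Pr x h'))) (Suc k)) (msmul F (t ^ k) (R (Pr x (Pr h' (Sc t))))) =
      madd F (msum F (\<lambda>j. msmul F (t ^ j) (msmul F (s ^ j) (a j (Pr x h)))) (Suc k))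
        (msmul F (t ^ k) (msmul F (s ^ k) (R (Pr x (Pr h (Sc (s * unSc (Sc t))))))))"
        using e1 e2 xx sc[OF Rc] by simp
    qed
  qed
  then show ?thesis using j by (simp add: h'_def)
qed

end



fun ee :: "(('k, 'b) tmod \<Rightarrow> ('k, 'b) tmod \<Rightarrow> ('k, 'b) pt topology) \<Rightarrow> ('k::comm_ring_1, 'b) tmod \<Rightarrow> ('k, 'b) tmod \<Rightarrow> nat \<Rightarrow> ('k, 'b) pt \<Rightarrow> ('k, 'b) pt" where
  "ee T Km E 0 h = h"
| "ee T Km E (Suc m) h = Pr (mzero (extn T Km m E)) (Pr (mzero (extn T Km m E)) (Sc 1))"

fun qq :: "(('k, 'b) tmod \<Rightarrow> ('k, 'b) tmod \<Rightarrow> ('k, 'b) pt topology) \<Rightarrow> ('k::comm_ring_1, 'b) tmod \<Rightarrow> ('k, 'b) tmod \<Rightarrow> nat \<Rightarrow> ('k, 'b) pt \<Rightarrow> ('k, 'b) pt" where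
  "qq T Km E 0 z = pfst z"
| "qq T Km E (Suc m) z = Pr (qq T Km E m z) (Pr (ee T Km E m (psnd z)) (Sc 0))"

fun PP :: "(('k, 'b) tmod \<Rightarrow> ('k, 'b) tmod \<Rightarrow> ('k, 'b) pt topology) \<Rightarrow> ('k::comm_ring_1, 'b) tmod \<Rightarrow> ('k, 'b) tmod \<Rightarrow> nat \<Rightarrow> ('k, 'b) pt \<Rightarrow> ('k, 'b) pt" where
  "PP T Km E 0 p = madd E (pfst p) (msmul E (unSc (psnd (psnd p))) (pfst (psnd p)))"
| "PP T Km E (Suc m) p = Pr (qq T Km E m (Pr (pfst p) (pfst (psnd p)))) (Pr (ee T Km E m (pfst (psnd p))) (psnd (psnd p)))"

context c0c
begin

context
  fixes E :: "('k, 'b) tmod" and U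
  assumes E: "E \<in> Ms" and U: "openin (mtop E) U"
begin

lemma Et: "is_tmod E" using tm E by blast
lemma UE: "U \<subseteq> mcar E" using open_sub[OF E U] .

lemma tmn: "is_tmod (extn T Km m E)" using tm extn_Ms E by blast

lemma F1: "h \<in> mcar E \<Longrightarrow> ee T Km E m h \<in> mcar (extn T Km m E)"
  by (cases m) (auto simp: tmn m_zero)

lemma F2: "x \<in> U \<Longrightarrow> h \<in> mcar E \<Longrightarrow> qq T Km E m (Pr x h) \<in> domn T Km m E U"
proof (induction m)
  case 0 then show ?case by simp
next
  case (Suc m)
  have q: "qq T Km E m (Pr x h) \<in> mcar (extn T Km m E)" using Suc domn_sub[OF E U] by blast
  show ?case using Suc F1[OF Suc.prems(2), of m] q tmn[of m] by simp
qed

lemma F3: "x \<in> U \<Longrightarrow> h \<in> mcar E \<Longrightarrow>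
  madd (extn T Km m E) (qq T Km E m (Pr x h)) (msmul (extn T Km m E) t (ee T Km E m h)) = PP T Km E m (Pr x (Pr h (Sc t)))"
proof (cases m)
  case 0 then show ?thesis by simp
next
  case (Suc n)
  assume x: "x \<in> U" and h: "h \<in> mcar E"
  have q: "qq T Km E n (Pr x h) \<in> mcar (extn T Km n E)" using F2[OF x h] domn_sub[OF E U] by blast
  have e: "ee T Km E n h \<in> mcar (extn T Km n E)" using F1[OF h] .
  show ?thesis using Suc q e tmn[of n] by simp
qed

lemma F4: "x \<in> U \<Longrightarrow> h \<in> mcar E \<Longrightarrow> madd E x (msmul E t h) \<in> U \<Longrightarrow> PP T Km E m (Pr x (Pr h (Sc t))) \<in> domn T Km m E U"
proof (cases m)
  case 0 then show "x \<in> U \<Longrightarrow> h \<in> mcar E \<Longrightarrow> madd E x (msmul E t h) \<in> U \<Longrightarrow> ?thesis" by simp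
next
  case (Suc n)
  assume x: "x \<in> U" and h: "h \<in> mcar E" and xt: "madd E x (msmul E t h) \<in> U"
  have "PP T Km E n (Pr x (Pr h (Sc t))) \<in> domn T Km n E U"
  proof (induction n)
    case 0 then show ?case using xt by simp
  next
    case (Suc n)
    then show ?case using F2[OF x h] F1[OF h] F3[OF x h, of n t] by simp
  qed
  then show ?thesis using Suc F2[OF x h] F1[OF h] F3[OF x h, of n t] by simp
qed

lemma F5: "x \<in> U \<Longrightarrow> h \<in> mcar E \<Longrightarrow> PP T Km E m (Pr x (Pr h (Sc 0))) = qq T Km E m (Pr x h)"
  using UE Et by (cases m) auto

end

lemma aff_pair: assumes A: "aff Z X L L0" and B: "aff Z X M M0"
  shows "aff Z (ext1 T Km X) (\<lambda>z. Pr (L z) (Pr (M z) (Sc 0))) (\<lambda>z. Pr (L0 z) (Pr (M0 z) (Sc 0)))"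
proof -
  have L: "C0 Z X (mcar Z) L" and L0: "C0 Z X (mcar Z) L0" using A by (auto simp: aff_def)
  have M: "C0 Z X (mcar Z) M" and M0: "C0 Z X (mcar Z) M0" using B by (auto simp: aff_def)
  have Z: "Z \<in> Ms" using C0_Ms1[OF L] .
  have c: "C0 Z Km (mcar Z) (\<lambda>_. Sc 0)" by (rule const0[OF Z Km_Ms]) simp
  have Xt: "is_tmod X" using tm C0_Ms2[OF L] by blast
  show ?thesis unfolding aff_def
  proof (intro conjI ballI allI)
    show "C0 Z (ext1 T Km X) (mcar Z) (\<lambda>z. Pr (L z) (Pr (M z) (Sc 0)))"
      unfolding ext1_def by (rule pair[OF L pair[OF M c]])
    show "C0 Z (ext1 T Km X) (mcar Z) (\<lambda>z. Pr (L0 z) (Pr (M0 z) (Sc 0)))"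
      unfolding ext1_def by (rule pair[OF L0 pair[OF M0 c]])
    fix z w t assume zw: "z \<in> mcar Z" "w \<in> mcar Z"
    show "Pr (L (madd Z z (msmul Z t w))) (Pr (M (madd Z z (msmul Z t w))) (Sc 0)) =
        madd (ext1 T Km X) (Pr (L z) (Pr (M z) (Sc 0))) (msmul (ext1 T Km X) t (Pr (L0 w) (Pr (M0 w) (Sc 0))))"
      "Pr (L0 (madd Z z (msmul Z t w))) (Pr (M0 (madd Z z (msmul Z t w))) (Sc 0)) =
        madd (ext1 T Km X) (Pr (L0 z) (Pr (M0 z) (Sc 0))) (msmul (ext1 T Km X) t (Pr (L0 w) (Pr (M0 w) (Sc 0))))"
      using A B zw by (simp_all add: aff_def)
  qed
qed

lemma aff_const: "Z \<in> Ms \<Longrightarrow> X \<in> Ms \<Longrightarrow> c \<in> mcar X \<Longrightarrow> aff Z X (\<lambda>_. c) (\<lambda>_. mzero X)"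
  unfolding aff_def using const0 tm m_zero by (auto simp: tm)

lemma aff_fst: "E \<in> Ms \<Longrightarrow> aff (prodm T E E) E pfst pfst"
  unfolding aff_def using pfst0 by auto

lemma aff_snd: "E \<in> Ms \<Longrightarrow> aff (prodm T E E) E psnd psnd"
  unfolding aff_def using psnd0 by auto

lemma aff_ee: "E \<in> Ms \<Longrightarrow> \<exists>M0. aff (prodm T E E) (extn T Km m E) (\<lambda>z. ee T Km E m (psnd z)) M0"
proof (cases m)
  case 0
  assume E: "E \<in> Ms"
  show ?thesis using aff_snd[OF E] 0 by (auto simp: fun_eq_iff)
next
  case (Suc n)
  assume E: "E \<in> Ms"
  have "aff (prodm T E E) (extn T Km m E) (\<lambda>_. Pr (mzero (extn T Km n E)) (Pr (mzero (extn T Km n E)) (Sc 1))) (\<lambda>_. mzero (extn T Km m E))"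
    by (rule aff_const) (auto simp: E Suc tm m_zero)
  then show ?thesis using Suc by auto
qed

lemma aff_qq: "E \<in> Ms \<Longrightarrow> \<exists>L0. aff (prodm T E E) (extn T Km m E) (qq T Km E m) L0"
proof (induction m)
  case 0 then show ?case using aff_fst by (auto simp: fun_eq_iff)
next
  case (Suc m)
  obtain L0 where L0: "aff (prodm T E E) (extn T Km m E) (qq T Km E m) L0" using Suc by blast
  obtain M0 where M0: "aff (prodm T E E) (extn T Km m E) (\<lambda>z. ee T Km E m (psnd z)) M0" using aff_ee Suc by blast
  have e: "qq T Km E (Suc m) = (\<lambda>z. Pr (qq T Km E m z) (Pr (ee T Km E m (psnd z)) (Sc 0)))" by (simp add: fun_eq_iff)
  show ?case using aff_pair[OF L0 M0] e by auto
qed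

end



context c0c
begin

lemma PP_C0: assumes E: "E \<in> Ms"
  shows "C0 (ext1 T Km E) (extn T Km m E) (mcar (ext1 T Km E)) (PP T Km E m)"
proof (cases m)
  case 0
  have e: "PP T Km E 0 = (\<lambda>p. madd E (pfst p) (msmul E (unSc (psnd (psnd p))) (pfst (psnd p))))"
    by (simp add: fun_eq_iff)
  show ?thesis using dqmap[OF E] 0 e by simp
next
  case (Suc n)
  have p1: "C0 (ext1 T Km E) E (mcar (ext1 T Km E)) pfst" unfolding ext1_def by (rule pfst0) (auto simp: E)
  have p2: "C0 (ext1 T Km E) (prodm T E Km) (mcar (ext1 T Km E)) psnd" unfolding ext1_def by (rule psnd0) (auto simp: E)
  have a: "C0 (ext1 T Km E) E (mcar (ext1 T Km E)) (\<lambda>p. pfst (psnd p))" by (rule fst[OF E Km_Ms p2])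
  have b: "C0 (ext1 T Km E) Km (mcar (ext1 T Km E)) (\<lambda>p. psnd (psnd p))" by (rule snd[OF E Km_Ms p2])
  have pi: "C0 (ext1 T Km E) (prodm T E E) (mcar (ext1 T Km E)) (\<lambda>p. Pr (pfst p) (pfst (psnd p)))"
    by (rule pair[OF p1 a])
  obtain L0 where L0: "aff (prodm T E E) (extn T Km n E) (qq T Km E n) L0" using aff_qq[OF E] by blast
  have q: "C0 (ext1 T Km E) (extn T Km n E) (mcar (ext1 T Km E)) (\<lambda>p. qq T Km E n (Pr (pfst p) (pfst (psnd p))))"
    by (rule comp[OF pi]) (use L0 C0_img[OF pi] in \<open>auto simp: aff_def\<close>)
  have e: "C0 (ext1 T Km E) (extn T Km n E) (mcar (ext1 T Km E)) (\<lambda>p. ee T Km E n (pfst (psnd p)))"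
  proof (cases n)
    case 0 then show ?thesis using a by simp
  next
    case (Suc n')
    show ?thesis unfolding Suc ee.simps by (rule const0) (auto simp: E tm m_zero)
  qed
  have P: "C0 (ext1 T Km E) (ext1 T Km (extn T Km n E)) (mcar (ext1 T Km E)) (\<lambda>p. Pr (qq T Km E n (Pr (pfst p) (pfst (psnd p)))) (Pr (ee T Km E n (pfst (psnd p))) (psnd (psnd p))))"
    unfolding ext1_def[of T Km "extn T Km n E"] by (rule pair[OF q pair[OF e b]])
  have e': "PP T Km E (Suc n) = (\<lambda>p. Pr (qq T Km E n (Pr (pfst p) (pfst (psnd p)))) (Pr (ee T Km E n (pfst (psnd p))) (psnd (psnd p))))"
    by (simp add: fun_eq_iff)
  show ?thesis using P Suc e' by simp
qed

lemma existence:
  assumes E: "E \<in> Ms" and F: "F \<in> Ms" and U: "openin (mtop E) U"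
    and G0: "G 0 = f" and GC: "\<forall>i\<le>k. C0 (extn T Km i E) F (domn T Km i E U) (G i)"
    and Gd: "\<forall>i<k. is_dq (extn T Km i E) F (domn T Km i E U) (G i) (G (Suc i))"
  shows "taylor_exp T Km C0 E F U k f (\<lambda>j z. G j (qq T Km E j z))
     (\<lambda>p. madd F (G k (PP T Km E k p)) (msmul F (-1) (G k (qq T Km E k (Pr (pfst p) (pfst (psnd p)))))))"
proof -
  have Ft: "is_tmod F" using tm F by blast
  have Et: "is_tmod E" using tm E by blast
  define D where "D = {Pr x h | x h. x \<in> U \<and> h \<in> mcar E}"
  have D: "openin (mtop (prodm T E E)) D"
  proof -
    have "D = {z \<in> mcar (prodm T E E). pfst z \<in> U}" using UE[OF E U] by (auto simp: D_def)
    then show ?thesis using preimage_open[OF pfst0[OF E E] U] by simp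
  qed
  have p1: "C0 (ext1 T Km E) E (mcar (ext1 T Km E)) pfst" unfolding ext1_def by (rule pfst0) (auto simp: E)
  have p2: "C0 (ext1 T Km E) (prodm T E Km) (mcar (ext1 T Km E)) psnd" unfolding ext1_def by (rule psnd0) (auto simp: E)
  have a: "C0 (ext1 T Km E) E (mcar (ext1 T Km E)) (\<lambda>p. pfst (psnd p))" by (rule fst[OF E Km_Ms p2])
  have pi: "C0 (ext1 T Km E) (prodm T E E) (mcar (ext1 T Km E)) (\<lambda>p. Pr (pfst p) (pfst (psnd p)))"
    by (rule pair[OF p1 a])
  have DO: "openin (mtop (ext1 T Km E)) (dom1 E U)" using dom1_open[OF E U] .
  have DS: "dom1 E U \<subseteq> mcar (ext1 T Km E)" using open_sub[OF ext1_Ms[OF E] DO] .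
  have GkC: "C0 (extn T Km k E) F (domn T Km k E U) (G k)" using GC by simp
  have GA: "G j (qq T Km E j (Pr x h)) \<in> mcar F" if "j \<le> k" "x \<in> U" "h \<in> mcar E" for j x h
    using C0_img[OF GC[rule_format, OF that(1)] F2[OF E U that(2,3)]] .
  have P1: "isCk T Km C0 (k - j) (prodm T E E) F D (\<lambda>z. G j (qq T Km E j z))" if j: "j \<le> k" for j
  proof -
    obtain L0 where L0: "aff (prodm T E E) (extn T Km j E) (qq T Km E j) L0" using aff_qq[OF E] by blast
    show ?thesis
      by (rule chain[OF isCk_shift[of G f k C0 T Km E F U j, OF G0 GC Gd j] L0 D]) (auto simp: D_def F2[OF E U])
  qed
  have PC: "C0 (ext1 T Km E) F (dom1 E U) (\<lambda>p. G k (PP T Km E k p))"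
  proof (rule comp[OF restr[OF PP_C0[OF E] DO DS] GkC])
    fix p assume "p \<in> dom1 E U"
    then show "PP T Km E k p \<in> domn T Km k E U" by (auto elim!: dom1_E intro: F4[OF E U])
  qed
  have QC: "C0 (ext1 T Km E) F (dom1 E U) (\<lambda>p. G k (qq T Km E k (Pr (pfst p) (pfst (psnd p)))))"
  proof (rule comp[OF restr[OF pi DO DS]])
    obtain L0 where L0: "aff (prodm T E E) (extn T Km k E) (qq T Km E k) L0" using aff_qq[OF E] by blast
    have "C0 (prodm T E E) (extn T Km k E) D (qq T Km E k)"
      by (rule restr[OF _ D]) (use L0 in \<open>auto simp: aff_def D_def UE[OF E U, THEN subsetD]\<close>)
    then show "C0 (prodm T E E) F D (\<lambda>z. G k (qq T Km E k z))"
      by (rule comp[OF _ GkC]) (auto simp: D_def F2[OF E U])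
    fix p assume "p \<in> dom1 E U"
    then show "Pr (pfst p) (pfst (psnd p)) \<in> D" by (auto elim!: dom1_E simp: D_def)
  qed
  have RC: "C0 (ext1 T Km E) F (dom1 E U)
     (\<lambda>p. madd F (G k (PP T Km E k p)) (msmul F (-1) (G k (qq T Km E k (Pr (pfst p) (pfst (psnd p)))))))"
    by (rule add[OF PC scal[OF QC]])
  have R0: "madd F (G k (PP T Km E k (Pr x (Pr h (Sc 0))))) (msmul F (-1) (G k (qq T Km E k (Pr (pfst (Pr x (Pr h (Sc 0)))) (pfst (psnd (Pr x (Pr h (Sc 0))))))))) = mzero F"
    if x: "x \<in> U" and h: "h \<in> mcar E" for x h
  proof -
    have "G k (qq T Km E k (Pr x h)) \<in> mcar F" using C0_img[OF GkC F2[OF E U x h]] .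
    then show ?thesis using F5[OF E U x h] m_neg[OF Ft] by simp
  qed
  have EX: "f (madd E x (msmul E t h)) = madd F (msum F (\<lambda>j. msmul F (t ^ j) (G j (qq T Km E j (Pr x h)))) m)
      (msmul F (t ^ m) (G m (PP T Km E m (Pr x (Pr h (Sc t))))))"
    if x: "x \<in> U" and h: "h \<in> mcar E" and xt: "madd E x (msmul E t h) \<in> U" and m: "m \<le> k" for x h t m
    using m
  proof (induction m)
    case 0
    have "f (madd E x (msmul E t h)) \<in> mcar F" using C0_img[of E F U f] GC G0 xt by force
    then show ?case using G0 Ft by simp
  next
    case (Suc m)
    have mk: "m < k" using Suc by simp
    have q: "qq T Km E m (Pr x h) \<in> domn T Km m E U" using F2[OF E U x h] .
    have e: "ee T Km E m h \<in> mcar (extn T Km m E)" using F1[OF E U h] .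
    have qe: "madd (extn T Km m E) (qq T Km E m (Pr x h)) (msmul (extn T Km m E) t (ee T Km E m h)) \<in> domn T Km m E U"
      using F3[OF E U x h] F4[OF E U x h xt] by simp
    have dq: "G m (PP T Km E m (Pr x (Pr h (Sc t)))) = madd F (G m (qq T Km E m (Pr x h)))
        (msmul F t (G (Suc m) (PP T Km E (Suc m) (Pr x (Pr h (Sc t))))))"
    proof -
      have "G m (madd (extn T Km m E) (qq T Km E m (Pr x h)) (msmul (extn T Km m E) t (ee T Km E m h))) =
         madd F (G m (qq T Km E m (Pr x h))) (msmul F t (G (Suc m) (Pr (qq T Km E m (Pr x h)) (Pr (ee T Km E m h) (Sc t)))))"
        using Gd[rule_format, OF mk] q e qe unfolding is_dq_def by blast
      then show ?thesis using F3[OF E U x h, of m t] by simp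
    qed
    have A: "G m (qq T Km E m (Pr x h)) \<in> mcar F" using C0_img[OF GC[rule_format, OF less_imp_le[OF mk]] q] .
    have B: "G (Suc m) (PP T Km E (Suc m) (Pr x (Pr h (Sc t)))) \<in> mcar F"
      using C0_img GC F4[OF E U x h xt] Suc.prems by blast
    have S: "msum F (\<lambda>j. msmul F (t ^ j) (G j (qq T Km E j (Pr x h)))) m \<in> mcar F"
      using mk by (auto intro!: msum_car[OF Ft] m_smul[OF Ft] GA[OF _ x h])
    show ?case using Suc.IH Suc.prems dq alg1[OF Ft S A B, of t m] by simp
  qed
  show ?thesis unfolding taylor_exp_def
  proof (intro conjI allI impI ballI)
    show "\<And>j. j \<le> k \<Longrightarrow> isCk T Km C0 (k - j) (prodm T E E) F {Pr x h |x h. x \<in> U \<and> h \<in> mcar E} (\<lambda>z. G j (qq T Km E j z))"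
      using P1 by (simp add: D_def)
    show "C0 (ext1 T Km E) F (dom1 E U) (\<lambda>p. madd F (G k (PP T Km E k p)) (msmul F (-1) (G k (qq T Km E k (Pr (pfst p) (pfst (psnd p)))))))"
      by (rule RC)
    show "\<And>x h. x \<in> U \<Longrightarrow> h \<in> mcar E \<Longrightarrow> madd F (G k (PP T Km E k (Pr x (Pr h (Sc 0))))) (msmul F (-1) (G k (qq T Km E k (Pr (pfst (Pr x (Pr h (Sc 0)))) (pfst (psnd (Pr x (Pr h (Sc 0))))))))) = mzero F"
      by (rule R0)
    fix x h t assume d: "Pr x (Pr h (Sc t)) \<in> dom1 E U"
    then have x: "x \<in> U" and h: "h \<in> mcar E" and xt: "madd E x (msmul E t h) \<in> U" by auto
    have A: "G k (qq T Km E k (Pr x h)) \<in> mcar F" using C0_img[OF GkC F2[OF E U x h]] .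
    have B: "G k (PP T Km E k (Pr x (Pr h (Sc t)))) \<in> mcar F" using C0_img[OF GkC F4[OF E U x h xt]] .
    have S: "msum F (\<lambda>j. msmul F (t ^ j) (G j (qq T Km E j (Pr x h)))) k \<in> mcar F"
      by (auto intro!: msum_car[OF Ft] m_smul[OF Ft] GA[OF _ x h])
    have N: "msmul F (-1) (G k (qq T Km E k (Pr x h))) \<in> mcar F" using A Ft by simp
    have ar: "madd F (G k (qq T Km E k (Pr x h))) (madd F (G k (PP T Km E k (Pr x (Pr h (Sc t))))) (msmul F (-1) (G k (qq T Km E k (Pr x h)))))
        = G k (PP T Km E k (Pr x (Pr h (Sc t))))"
    proof -
      let ?q = "G k (qq T Km E k (Pr x h))" and ?y = "G k (PP T Km E k (Pr x (Pr h (Sc t))))" and ?n = "msmul F (-1) (G k (qq T Km E k (Pr x h)))"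
      have "madd F ?q (madd F ?y ?n) = madd F (madd F ?q ?y) ?n" using A B N by (simp add: m_assoc[OF Ft])
      also have "\<dots> = madd F (madd F ?y ?q) ?n" using A B by (simp add: m_comm[OF Ft])
      also have "\<dots> = madd F ?y (madd F ?q ?n)" using A B N by (simp add: m_assoc[OF Ft])
      also have "\<dots> = ?y" using m_neg[OF Ft A] B Ft by simp
      finally show ?thesis .
    qed
    show "f (madd E x (msmul E t h)) =
       madd F (msum F (\<lambda>j. msmul F (t ^ j) (G j (qq T Km E j (Pr x h)))) (Suc k))
        (msmul F (t ^ k) (madd F (G k (PP T Km E k (Pr x (Pr h (Sc t))))) (msmul F (-1) (G k (qq T Km E k (Pr (pfst (Pr x (Pr h (Sc t)))) (pfst (psnd (Pr x (Pr h (Sc t)))))))))))"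
      using EX[OF x h xt order.refl] alg2[OF Ft S A, of "madd F (G k (PP T Km E k (Pr x (Pr h (Sc t))))) (msmul F (-1) (G k (qq T Km E k (Pr x h))))" "t^k"] B N ar Ft
      by simp
  qed
qed

end

theorem theorem5p1:
  fixes Ms :: "('k::comm_ring_1, 'b) tmod set"
    and Km E F :: "('k, 'b) tmod"
    and T :: "('k, 'b) tmod \<Rightarrow> ('k, 'b) tmod \<Rightarrow> ('k, 'b) pt topology"
    and C0 :: "('k, 'b) tmod \<Rightarrow> ('k, 'b) tmod \<Rightarrow> ('k, 'b) pt set \<Rightarrow> (('k, 'b) pt \<Rightarrow> ('k, 'b) pt) \<Rightarrow> bool"
    and U :: "('k, 'b) pt set"
    and k :: nat
    and f :: "('k, 'b) pt \<Rightarrow> ('k, 'b) pt"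
  assumes concept: "c0_concept Ms Km T C0"
    and E: "E \<in> Ms" and F: "F \<in> Ms"
    and U: "openin (mtop E) U"
    and f: "isCk T Km C0 k E F U f"
  shows "\<exists>a R. taylor_exp T Km C0 E F U k f a R \<and>
           (\<forall>a' R'. taylor_exp T Km C0 E F U k f a' R' \<longrightarrow>
              (\<forall>j\<le>k. \<forall>x\<in>U. \<forall>h\<in>mcar E. a' j (Pr x h) = a j (Pr x h)) \<and>
              (\<forall>p\<in>dom1 E U. R' p = R p)) \<and>
           (\<forall>j\<le>k. \<forall>x\<in>U. \<forall>h\<in>mcar E. \<forall>s.
              a j (Pr x (msmul E s h)) = msmul F (s ^ j) (a j (Pr x h)))"
proof -
  interpret c0c Ms Km T C0 by (rule c0c.intro[OF concept])
  obtain G where G0: "G 0 = f" and GC: "\<forall>i\<le>k. C0 (extn T Km i E) F (domn T Km i E U) (G i)"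
    and Gd: "\<forall>i<k. is_dq (extn T Km i E) F (domn T Km i E U) (G i) (G (Suc i))"
    using f unfolding isCk_def by blast
  have A: "taylor_exp T Km C0 E F U k f (\<lambda>j z. G j (qq T Km E j z))
     (\<lambda>p. madd F (G k (PP T Km E k p)) (msmul F (-1) (G k (qq T Km E k (Pr (pfst p) (pfst (psnd p)))))))"
    (is "taylor_exp T Km C0 E F U k f ?a ?R")
    by (rule existence[OF E F U G0 GC Gd])
  have U1: "\<forall>a' R'. taylor_exp T Km C0 E F U k f a' R' \<longrightarrow>
              (\<forall>j\<le>k. \<forall>x\<in>U. \<forall>h\<in>mcar E. a' j (Pr x h) = ?a j (Pr x h)) \<and>
              (\<forall>p\<in>dom1 E U. R' p = ?R p)"
    using uniq_taylor[OF E F U A] by blast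
  have H: "\<forall>j\<le>k. \<forall>x\<in>U. \<forall>h\<in>mcar E. \<forall>s. ?a j (Pr x (msmul E s h)) = msmul F (s ^ j) (?a j (Pr x h))"
    using homog[OF E F U A] by blast
  show ?thesis using A U1 H by blast
qed



end
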